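(* Let $w,\tilde w\in W$ and $\varphi,\tilde\varphi\in S_1$. Then: (i) $m_{w,\varphi}$ is an irreducible P-module and equals $(\mathbf C^d)_{\mathrm{atom}}^{[p]}$, where $p=w^\infty$ and $d=|w|$; (ii) if $\mathfrak H$ is an atomic irreducible P-module, then $\mathfrak H$ is unitarily equivalent to $m_{v,\lambda}$ for some $v\in W_d$ and $\lambda\in S_1$ with $d=\dim(\mathfrak H)$; (iii) $m_{w,\varphi}$ and $m_{\tilde w,\tilde\varphi}$ are unitarily equivalent if and only if $(w,\varphi)=(\tilde w,\tilde\varphi)$.
   Context: A P-module is $(A,B,\mathfrak H)$ with $\mathfrak H$ finite-dimensional complex Hilbert, $A^*A+B^*B=\mathrm{id}$. Sub-module: subspace invariant under $A,B$; irreducible: no sub-modules besides $\{0\}$ and itself. Two P-modules are unitarily equivalent if a unitary $U$ satisfies $UA=\tilde AU$, $UB=\tilde BU$. $\mathfrak H=\mathfrak H_{\mathrm{comp}}\oplus\mathfrak H_{\mathrm{res}}$ orthogonally, where $\mathfrak H_{\mathrm{comp}}$ is a direct sum of irreducible sub-modules and $\mathfrak H_{\mathrm{res}}$ contains no non-zero sub-module. Rays: infinite binary sequences $p=x_1x_2\cdots$, $p_n=x_1\cdots x_n$, ${}_np=x_{n+1}\cdots$; $w\xi:=X_{x_n}\cdots X_{x_1}\xi$ for $w=x_1\cdots x_n$, $X_0=A,X_1=B$. Non-zero $\xi$ is contained in $p$ if $\|p_n\xi\|=\|\xi\|$ for all $n$. $\mathfrak H_{\mathrm{atom}}=\mathrm{span}\{\xi\in\mathfrak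 H_{\mathrm{comp}}:\xi\text{ contained in a periodic ray }w^\infty\}$; for periodic $p$, $\mathfrak H^{[p]}_{\mathrm{atom}}=\mathrm{span}\{\xi\in\mathfrak H_{\mathrm{atom}}:\xi\text{ contained in }{}_kp\text{ for some }k\}$. $\mathfrak H$ is atomic if $\mathfrak H_{\mathrm{atom}}=\mathfrak H_{\mathrm{comp}}$. A word $w$ is prime if $w\ne u^n$ for all words $u$ and $n\ge2$. $W_d$ is a fixed set of representatives of prime binary words of length $d$ modulo cyclic permutation; $W=\bigcup_{d\ge1}W_d$; $S_1$ is the unit circle. For $w\in W_d$ with standard basis $e_1,\dots,e_d$ of $\mathbf C^d$: $A_w e_n=e_{n+1}$, $B_we_n=0$ if the $n$-th digit of $w$ is $0$, and $B_we_n=e_{n+1}$, $A_we_n=0$ if it is $1$ (indices mod $d$). $D_\varphi=\mathrm{diag}(1,\dots,1,\varphi)$ and $m_{w,\varphi}=(A_wD_\varphi,B_wD_\varphi,\mathbf C^d)$. *)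

theory Defs
  imports Complex_Main "Jordan_Normal_Form.Matrix"
begin

text \<open>A finite-dimensional complex Hilbert space is modelled (up to unitary
isomorphism) as the standard space C^n = carrier_vec n with the standard
inner product; operators are n x n complex matrices.\<close>

definition adj :: "complex mat \<Rightarrow> complex mat" where
  "adj M = mat (dim_col M) (dim_row M) (\<lambda>(i,j). cnj (M $$ (j,i)))"

definition vnorm :: "complex vec \<Rightarrow> real" where
  "vnorm v = sqrt (\<Sum>i<dim_vec v. (cmod (v $ i))^2)"

definition pmodule :: "nat \<Rightarrow> complex mat \<Rightarrow> complex mat \<Rightarrow> bool" where
  "pmodule n A B \<longleftrightarrow> A \<in> carrier_mat n n \<and> B \<in> carrier_mat n n \<and>
     adj A * A + adj B * B = 1\<^sub>m n"

definition csubspace :: "nat \<Rightarrow> complex vec set \<Rightarrow> bool" where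
  "csubspace n V \<longleftrightarrow> V \<subseteq> carrier_vec n \<and> 0\<^sub>v n \<in> V \<and>
     (\<forall>x\<in>V. \<forall>y\<in>V. x + y \<in> V) \<and> (\<forall>c. \<forall>x\<in>V. c \<cdot>\<^sub>v x \<in> V)"

definition cspan :: "nat \<Rightarrow> complex vec set \<Rightarrow> complex vec set" where
  "cspan n S = \<Inter> {V. csubspace n V \<and> S \<subseteq> V}"

definition submodule :: "nat \<Rightarrow> complex mat \<Rightarrow> complex mat \<Rightarrow> complex vec set \<Rightarrow> bool" where
  "submodule n A B V \<longleftrightarrow> csubspace n V \<and> (\<forall>x\<in>V. A *\<^sub>v x \<in> V \<and> B *\<^sub>v x \<in> V)"

definition irred_sub :: "nat \<Rightarrow> complex mat \<Rightarrow> complex mat \<Rightarrow> complex vec set \<Rightarrow> bool" where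
  "irred_sub n A B M \<longleftrightarrow> submodule n A B M \<and> M \<noteq> {0\<^sub>v n} \<and>
     (\<forall>V. submodule n A B V \<and> V \<subseteq> M \<longrightarrow> V = {0\<^sub>v n} \<or> V = M)"

definition irreducible_pmod :: "nat \<Rightarrow> complex mat \<Rightarrow> complex mat \<Rightarrow> bool" where
  "irreducible_pmod n A B \<longleftrightarrow> irred_sub n A B (carrier_vec n)"

definition Hcomp :: "nat \<Rightarrow> complex mat \<Rightarrow> complex mat \<Rightarrow> complex vec set" where
  "Hcomp n A B = cspan n (\<Union> {M. irred_sub n A B M})"

text \<open>Words are bool lists (False = 0, True = 1); rays are bool sequences,
p 0 = x_1. The word x_1...x_n acts as X_{x_n} ... X_{x_1}.\<close>
definition act :: "complex mat \<Rightarrow> complex mat \<Rightarrow> bool list \<Rightarrow> complex vec \<Rightarrow> complex vec" where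
  "act A B w \<xi> = fold (\<lambda>x v. (if x then B else A) *\<^sub>v v) w \<xi>"

definition prefix_ray :: "(nat \<Rightarrow> bool) \<Rightarrow> nat \<Rightarrow> bool list" where
  "prefix_ray p n = map p [0..<n]"

definition shift_ray :: "nat \<Rightarrow> (nat \<Rightarrow> bool) \<Rightarrow> (nat \<Rightarrow> bool)" where
  "shift_ray k p = (\<lambda>i. p (i + k))"

definition per_ray :: "bool list \<Rightarrow> (nat \<Rightarrow> bool)" where
  "per_ray w = (\<lambda>i. w ! (i mod length w))"

definition contained :: "nat \<Rightarrow> complex mat \<Rightarrow> complex mat \<Rightarrow> complex vec \<Rightarrow> (nat \<Rightarrow> bool) \<Rightarrow> bool" where
  "contained n A B \<xi> p \<longleftrightarrow> \<xi> \<in> carrier_vec n \<and> \<xi> \<noteq> 0\<^sub>v n \<and>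
     (\<forall>k. vnorm (act A B (prefix_ray p k) \<xi>) = vnorm \<xi>)"

definition Hatom :: "nat \<Rightarrow> complex mat \<Rightarrow> complex mat \<Rightarrow> complex vec set" where
  "Hatom n A B = cspan n {\<xi> \<in> Hcomp n A B. \<exists>w. w \<noteq> [] \<and> contained n A B \<xi> (per_ray w)}"

definition Hatom_ray :: "nat \<Rightarrow> complex mat \<Rightarrow> complex mat \<Rightarrow> (nat \<Rightarrow> bool) \<Rightarrow> complex vec set" where
  "Hatom_ray n A B p = cspan n {\<xi> \<in> Hatom n A B. \<exists>k. contained n A B \<xi> (shift_ray k p)}"

definition atomic :: "nat \<Rightarrow> complex mat \<Rightarrow> complex mat \<Rightarrow> bool" where
  "atomic n A B \<longleftrightarrow> Hatom n A B = Hcomp n A B"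

definition unit_equiv :: "nat \<Rightarrow> complex mat \<Rightarrow> complex mat \<Rightarrow> nat \<Rightarrow> complex mat \<Rightarrow> complex mat \<Rightarrow> bool" where
  "unit_equiv n A B n' A' B' \<longleftrightarrow> (\<exists>U \<in> carrier_mat n' n.
     adj U * U = 1\<^sub>m n \<and> U * adj U = 1\<^sub>m n' \<and> U * A = A' * U \<and> U * B = B' * U)"

definition prime_word :: "bool list \<Rightarrow> bool" where
  "prime_word w \<longleftrightarrow> (\<forall>u k. k \<ge> 2 \<longrightarrow> w \<noteq> concat (replicate k u))"

definition rep_set :: "bool list set \<Rightarrow> bool" where
  "rep_set W \<longleftrightarrow> (\<forall>w\<in>W. prime_word w) \<and>
     (\<forall>v. prime_word v \<longrightarrow> (\<exists>!w. w \<in> W \<and> (\<exists>k. v = rotate k w)))"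

text \<open>Indices 0-based: e_i maps to e_{(i+1) mod d}.\<close>
definition A_w :: "bool list \<Rightarrow> complex mat" where
  "A_w w = mat (length w) (length w)
     (\<lambda>(j,i). if j = Suc i mod length w \<and> \<not> w ! i then 1 else 0)"

definition B_w :: "bool list \<Rightarrow> complex mat" where
  "B_w w = mat (length w) (length w)
     (\<lambda>(j,i). if j = Suc i mod length w \<and> w ! i then 1 else 0)"

definition D_phi :: "nat \<Rightarrow> complex \<Rightarrow> complex mat" where
  "D_phi d \<phi> = mat d d (\<lambda>(i,j). if i = j then (if i = d - 1 then \<phi> else 1) else 0)"

end

theory Submission
  imports Defs "Jordan_Normal_Form.Spectral_Radius"
begin


definition ip :: "complex vec \<Rightarrow> complex vec \<Rightarrow> complex" where
  "ip x y = (\<Sum>i<dim_vec x. x$i * cnj (y$i))"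

lemma vnorm_sq: "(vnorm x)^2 = (\<Sum>i<dim_vec x. (cmod (x$i))^2)"
  by (simp add: vnorm_def sum_nonneg)

lemma ip_self: "ip x x = of_real ((vnorm x)^2)"
  unfolding vnorm_sq ip_def of_real_sum
  by (rule sum.cong, simp, simp add: complex_mult_cnj cmod_def power2_eq_square)

lemma vnorm_ge0: "vnorm x \<ge> 0" by (simp add: vnorm_def sum_nonneg)

lemma vnorm_zero_iff: assumes "x \<in> carrier_vec n" shows "vnorm x = 0 \<longleftrightarrow> x = 0\<^sub>v n"
proof
  assume "vnorm x = 0"
  hence "(\<Sum>i<dim_vec x. (cmod (x$i))^2) = 0" using vnorm_sq[of x] by simp
  hence "\<forall>i\<in>{..<dim_vec x}. (cmod (x$i))^2 = 0" by (subst sum_nonneg_eq_0_iff[symmetric]) auto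
  thus "x = 0\<^sub>v n" using assms by (intro eq_vecI) auto
next
  assume "x = 0\<^sub>v n" thus "vnorm x = 0" by (simp add: vnorm_def)
qed

lemma ip_adj: assumes M: "M \<in> carrier_mat r c" and x: "x \<in> carrier_vec c" and y: "y \<in> carrier_vec r"
  shows "ip (M *\<^sub>v x) y = ip x (adj M *\<^sub>v y)"
proof -
  have "ip (M *\<^sub>v x) y = (\<Sum>i<r. (\<Sum>j<c. M $$ (i,j) * x $ j) * cnj (y $ i))"
    using M x y unfolding ip_def by (simp add: scalar_prod_def row_def atLeast0LessThan)
  also have "\<dots> = (\<Sum>i<r. \<Sum>j<c. x $ j * (M $$ (i,j) * cnj (y $ i)))"
    by (rule sum.cong[OF refl]) (simp add: sum_distrib_left mult_ac)
  also have "\<dots> = (\<Sum>j<c. \<Sum>i<r. x $ j * (M $$ (i,j) * cnj (y $ i)))"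
    by (rule sum.swap)
  also have "\<dots> = ip x (adj M *\<^sub>v y)"
    using M x y unfolding ip_def adj_def
    by (simp add: scalar_prod_def row_def atLeast0LessThan sum_distrib_left mult_ac)
  finally show ?thesis .
qed

lemma dim_adj[simp]: "dim_row (adj M) = dim_col M" "dim_col (adj M) = dim_row M"
  by (simp_all add: adj_def)

lemma mat_vec_zero[simp]: "M \<in> carrier_mat r c \<Longrightarrow> M *\<^sub>v 0\<^sub>v c = 0\<^sub>v r"
  by (intro eq_vecI) (auto simp: scalar_prod_def)

lemma adj_carrier[simp]: "M \<in> carrier_mat r c \<Longrightarrow> adj M \<in> carrier_mat c r"
  by (simp add: adj_def)

lemma adj_adj[simp]: "M \<in> carrier_mat r c \<Longrightarrow> adj (adj M) = M"
  by (intro eq_matI) (auto simp: adj_def)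

lemma ip_adj2: assumes M: "M \<in> carrier_mat r c" and x: "x \<in> carrier_vec r" and y: "y \<in> carrier_vec c"
  shows "ip (adj M *\<^sub>v x) y = ip x (M *\<^sub>v y)"
  using ip_adj[OF adj_carrier[OF M] x y] M by simp

lemma ip_add2: "dim_vec y = dim_vec x \<Longrightarrow> dim_vec z = dim_vec x \<Longrightarrow> ip x (y + z) = ip x y + ip x z"
  unfolding ip_def by (simp add: sum.distrib distrib_left)

lemma ip_zero2: "ip x (0\<^sub>v (dim_vec x)) = 0"
  unfolding ip_def by simp

lemma ip_zero2': "dim_vec x = n \<Longrightarrow> ip x (0\<^sub>v n) = 0"
  unfolding ip_def by simp

lemma ip_smult1: "ip (c \<cdot>\<^sub>v x) y = c * ip x y"
  unfolding ip_def by (simp add: sum_distrib_left mult_ac)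

lemma ip_smult2: "dim_vec y = dim_vec x \<Longrightarrow> ip x (c \<cdot>\<^sub>v y) = cnj c * ip x y"
  unfolding ip_def by (simp add: sum_distrib_left mult_ac)

lemma ip_cnj: "dim_vec y = dim_vec x \<Longrightarrow> ip y x = cnj (ip x y)"
  unfolding ip_def by (simp add: mult_ac)

definition op :: "complex mat \<Rightarrow> complex mat \<Rightarrow> bool \<Rightarrow> complex mat" where
  "op A B b = (if b then B else A)"

lemma act_Nil[simp]: "act A B [] x = x" by (simp add: act_def)
lemma act_Cons[simp]: "act A B (b # u) x = act A B u (op A B b *\<^sub>v x)"
  by (simp add: act_def op_def)
lemma act_append: "act A B (u @ v) x = act A B v (act A B u x)"
  by (simp add: act_def)
lemma act_snoc: "act A B (u @ [b]) x = op A B b *\<^sub>v act A B u x"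
  by (simp add: act_def op_def)

lemma pmodule_op: "pmodule n A B \<Longrightarrow> op A B b \<in> carrier_mat n n"
  by (simp add: pmodule_def op_def)

lemma act_carrier: "pmodule n A B \<Longrightarrow> x \<in> carrier_vec n \<Longrightarrow> act A B u x \<in> carrier_vec n"
  by (induct u arbitrary: x) (auto intro: mult_mat_vec_carrier pmodule_op)

lemma pmodule_norm: assumes P: "pmodule n A B" and x: "x \<in> carrier_vec n"
  shows "(vnorm (A *\<^sub>v x))^2 + (vnorm (B *\<^sub>v x))^2 = (vnorm x)^2"
proof -
  have A: "A \<in> carrier_mat n n" and B: "B \<in> carrier_mat n n"
    and E: "adj A * A + adj B * B = 1\<^sub>m n" using P by (auto simp: pmodule_def)
  have "ip (A *\<^sub>v x) (A *\<^sub>v x) + ip (B *\<^sub>v x) (B *\<^sub>v x)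
      = ip x (adj A *\<^sub>v (A *\<^sub>v x)) + ip x (adj B *\<^sub>v (B *\<^sub>v x))"
    using A B x by (simp add: ip_adj)
  also have "\<dots> = ip x ((adj A * A + adj B * B) *\<^sub>v x)"
 proof -
    have "(adj A * A + adj B * B) *\<^sub>v x = adj A *\<^sub>v (A *\<^sub>v x) + adj B *\<^sub>v (B *\<^sub>v x)"
    proof -
      have c1: "adj A * A \<in> carrier_mat n n" "adj B * B \<in> carrier_mat n n" using A B by (meson adj_carrier mult_carrier_mat)+
      show ?thesis using A B x by (subst add_mult_distrib_mat_vec[OF c1 x]) (simp add: assoc_mult_mat_vec[OF adj_carrier[OF A] A x] assoc_mult_mat_vec[OF adj_carrier[OF B] B x])
    qed
    thus ?thesis using A B x by (simp add: ip_add2 carrier_vecD)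
  qed
  also have "\<dots> = ip x x" using E x by simp
  finally have "of_real ((vnorm (A *\<^sub>v x))^2 + (vnorm (B *\<^sub>v x))^2) = (of_real ((vnorm x)^2) :: complex)"
    by (simp add: ip_self)
  thus ?thesis using of_real_eq_iff by blast
qed

lemma contr: "pmodule n A B \<Longrightarrow> x \<in> carrier_vec n \<Longrightarrow> vnorm (op A B b *\<^sub>v x) \<le> vnorm x"
proof -
  assume P: "pmodule n A B" and x: "x \<in> carrier_vec n"
  have h1: "(vnorm (A *\<^sub>v x))^2 \<ge> 0" "(vnorm (B *\<^sub>v x))^2 \<ge> 0" by auto
  from pmodule_norm[OF P x] h1 have "(vnorm (A *\<^sub>v x))^2 \<le> (vnorm x)^2" "(vnorm (B *\<^sub>v x))^2 \<le> (vnorm x)^2"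
    by linarith+
  hence "(vnorm (op A B b *\<^sub>v x))^2 \<le> (vnorm x)^2" by (simp add: op_def)
  thus ?thesis using vnorm_ge0 power2_le_imp_le by blast
qed

lemma act_contr: "pmodule n A B \<Longrightarrow> x \<in> carrier_vec n \<Longrightarrow> vnorm (act A B u x) \<le> vnorm x"
proof (induct u arbitrary: x)
  case (Cons b u)
  have "op A B b *\<^sub>v x \<in> carrier_vec n" using Cons pmodule_op by (metis mult_mat_vec_carrier)
  from Cons(1)[OF Cons(2) this] contr[OF Cons(2,3)] show ?case using order_trans by fastforce
qed simp

lemma step_iso: assumes P: "pmodule n A B" and x: "x \<in> carrier_vec n"
  and eq: "vnorm (op A B b *\<^sub>v x) = vnorm x"
  shows "op A B (\<not> b) *\<^sub>v x = 0\<^sub>v n" "adj (op A B b) *\<^sub>v (op A B b *\<^sub>v x) = x"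
proof -
  have A: "A \<in> carrier_mat n n" and B: "B \<in> carrier_mat n n"
    and E: "adj A * A + adj B * B = 1\<^sub>m n" using P by (auto simp: pmodule_def)
  from pmodule_norm[OF P x] eq have "vnorm (op A B (\<not> b) *\<^sub>v x) = 0"
    by (cases b) (auto simp: op_def)
  thus z: "op A B (\<not> b) *\<^sub>v x = 0\<^sub>v n" using vnorm_zero_iff pmodule_op[OF P] x
    by (meson mult_mat_vec_carrier)
  have "x = (adj A * A + adj B * B) *\<^sub>v x" using E x by simp
  also have "\<dots> = adj A *\<^sub>v (A *\<^sub>v x) + adj B *\<^sub>v (B *\<^sub>v x)"
  proof -
    have c1: "adj A * A \<in> carrier_mat n n" "adj B * B \<in> carrier_mat n n" using A B by (meson adj_carrier mult_carrier_mat)+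
    show ?thesis using A B x by (subst add_mult_distrib_mat_vec[OF c1 x]) (simp add: assoc_mult_mat_vec[OF adj_carrier[OF A] A x] assoc_mult_mat_vec[OF adj_carrier[OF B] B x])
  qed
  finally have xe: "x = adj A *\<^sub>v (A *\<^sub>v x) + adj B *\<^sub>v (B *\<^sub>v x)" .
  show "adj (op A B b) *\<^sub>v (op A B b *\<^sub>v x) = x"
  proof -
    have z1: "adj A *\<^sub>v 0\<^sub>v n = 0\<^sub>v n" "adj B *\<^sub>v 0\<^sub>v n = 0\<^sub>v n"
      using mat_vec_zero[OF adj_carrier[OF A]] mat_vec_zero[OF adj_carrier[OF B]] by auto
    have c: "adj A *\<^sub>v (A *\<^sub>v x) \<in> carrier_vec n" "adj B *\<^sub>v (B *\<^sub>v x) \<in> carrier_vec n"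
      using A B x by (meson adj_carrier mult_mat_vec_carrier)+
    show ?thesis
    proof (cases b)
      case True
      then show ?thesis using xe z z1 c by (simp add: op_def)
    next
      case False
      then show ?thesis using xe z z1 c by (simp add: op_def)
    qed
  qed
qed


lemma prefix_Suc: "prefix_ray q (Suc k) = prefix_ray q k @ [q k]"
  by (simp add: prefix_ray_def)

lemma prefix_add: "prefix_ray q (a + k) = prefix_ray q a @ prefix_ray (shift_ray a q) k"
proof (induct k)
  case (Suc k) thus ?case by (simp add: prefix_Suc shift_ray_def add.commute)
qed (simp add: prefix_ray_def)

lemma prefix_Suc_Cons: "prefix_ray q (Suc k) = q 0 # prefix_ray (shift_ray 1 q) k"
  using prefix_add[of q 1 k] by (simp add: prefix_ray_def)

lemma shift_shift[simp]: "shift_ray a (shift_ray b q) = shift_ray (a + b) q"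
  by (simp add: shift_ray_def ac_simps)

lemma shift_0[simp]: "shift_ray 0 q = q" by (simp add: shift_ray_def)

lemma length_prefix[simp]: "length (prefix_ray q k) = k" by (simp add: prefix_ray_def)
lemma nth_prefix[simp]: "i < k \<Longrightarrow> prefix_ray q k ! i = q i" by (simp add: prefix_ray_def)

definition isoray :: "complex mat \<Rightarrow> complex mat \<Rightarrow> complex vec \<Rightarrow> (nat \<Rightarrow> bool) \<Rightarrow> bool" where
  "isoray A B x q \<longleftrightarrow> (\<forall>k. vnorm (act A B (prefix_ray q k) x) = vnorm x)"

lemma contained_iso: "Defs.contained n A B x q \<longleftrightarrow> x \<in> carrier_vec n \<and> x \<noteq> 0\<^sub>v n \<and> isoray A B x q"
  by (simp add: contained_def isoray_def)

lemma iso_shift: assumes "isoray A B x q"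
  shows "isoray A B (act A B (prefix_ray q a) x) (shift_ray a q)"
  using assms unfolding isoray_def
  by (metis act_append prefix_add)

lemma act_single: "act A B [b] x = op A B b *\<^sub>v x" by simp

lemma iso_step: assumes P: "pmodule n A B" and x: "x \<in> carrier_vec n" and I: "isoray A B x q"
  shows "op A B (\<not> q 0) *\<^sub>v x = 0\<^sub>v n" "adj (op A B (q 0)) *\<^sub>v (op A B (q 0) *\<^sub>v x) = x"
    "isoray A B (op A B (q 0) *\<^sub>v x) (shift_ray 1 q)"
proof -
  have p1: "prefix_ray q 1 = [q 0]" by (simp add: prefix_ray_def)
  have "vnorm (op A B (q 0) *\<^sub>v x) = vnorm x" using I unfolding isoray_def
    by (metis p1 act_single)
  from step_iso[OF P x this]
  show "op A B (\<not> q 0) *\<^sub>v x = 0\<^sub>v n" "adj (op A B (q 0)) *\<^sub>v (op A B (q 0) *\<^sub>v x) = x" by auto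
  show "isoray A B (op A B (q 0) *\<^sub>v x) (shift_ray 1 q)"
    using iso_shift[OF I, of 1] by (simp add: prefix_ray_def)
qed

lemma ortho: assumes P: "pmodule n A B"
  shows "x \<in> carrier_vec n \<Longrightarrow> y \<in> carrier_vec n \<Longrightarrow> isoray A B x q \<Longrightarrow> isoray A B y q'
    \<Longrightarrow> (\<forall>s<t. q s = q' s) \<Longrightarrow> q t \<noteq> q' t \<Longrightarrow> ip x y = 0"
proof (induct t arbitrary: x y q q')
  case 0
  let ?X = "op A B (q 0)"
  have X: "?X \<in> carrier_mat n n" by (rule pmodule_op[OF P])
  have "ip x y = ip (adj ?X *\<^sub>v (?X *\<^sub>v x)) y" using iso_step(2)[OF P 0(1,3)] by simp
  also have "\<dots> = ip (?X *\<^sub>v x) (?X *\<^sub>v y)"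
    by (rule ip_adj2[OF X]) (use X 0 in auto)
  also have "?X *\<^sub>v y = 0\<^sub>v n" using iso_step(1)[OF P 0(2,4)] 0(6) by (cases "q 0") auto
  finally show ?case using X 0(1) by (simp add: ip_zero2')
next
  case (Suc t)
  let ?X = "op A B (q 0)"
  have X: "?X \<in> carrier_mat n n" by (rule pmodule_op[OF P])
  have e: "q' 0 = q 0" using Suc(6) by auto
  have "ip x y = ip (adj ?X *\<^sub>v (?X *\<^sub>v x)) y" using iso_step(2)[OF P Suc(2,4)] by simp
  also have "\<dots> = ip (?X *\<^sub>v x) (?X *\<^sub>v y)"
    by (rule ip_adj2[OF X]) (use X Suc in auto)
  also have "\<dots> = 0"
  proof (rule Suc(1))
    show "?X *\<^sub>v x \<in> carrier_vec n" "?X *\<^sub>v y \<in> carrier_vec n" using X Suc by auto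
    show "isoray A B (?X *\<^sub>v x) (shift_ray 1 q)" using iso_step(3)[OF P Suc(2,4)] .
    show "isoray A B (?X *\<^sub>v y) (shift_ray 1 q')" using iso_step(3)[OF P Suc(3,5)] e by simp
    show "\<forall>s<t. shift_ray 1 q s = shift_ray 1 q' s" using Suc(6) by (simp add: shift_ray_def)
    show "shift_ray 1 q t \<noteq> shift_ray 1 q' t" using Suc(7) by (simp add: shift_ray_def)
  qed
  finally show ?case .
qed

lemma act_prefix_mono: assumes P: "pmodule n A B" and x: "x \<in> carrier_vec n" and "k \<le> K"
  shows "vnorm (act A B (prefix_ray q K) x) \<le> vnorm (act A B (prefix_ray q k) x)"
proof -
  obtain d where K: "K = k + d" using assms(3) le_Suc_ex by blast
  show ?thesis unfolding K prefix_add act_append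
    by (rule act_contr[OF P act_carrier[OF P x]])
qed

lemma iso_from_large: assumes P: "pmodule n A B" and x: "x \<in> carrier_vec n"
  and L: "\<And>k. \<exists>K\<ge>k. vnorm (act A B (prefix_ray q K) x) \<ge> vnorm x"
  shows "isoray A B x q"
  unfolding isoray_def
proof
  fix k
  obtain K where K: "K \<ge> k" "vnorm (act A B (prefix_ray q K) x) \<ge> vnorm x" using L by blast
  have "vnorm (act A B (prefix_ray q k) x) \<le> vnorm x" by (rule act_contr[OF P x])
  moreover have "vnorm (act A B (prefix_ray q K) x) \<le> vnorm (act A B (prefix_ray q k) x)"
    by (rule act_prefix_mono[OF P x K(1)])
  ultimately show "vnorm (act A B (prefix_ray q k) x) = vnorm x" using K(2) by linarith
qed


lemma length_concat_rep[simp]: "length (concat (replicate k u)) = k * length u"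
  by (induct k) auto

lemma nth_concat_rep: "i < k * length u \<Longrightarrow> concat (replicate k u) ! i = u ! (i mod length u)"
proof (induct k arbitrary: i)
  case (Suc k)
  show ?case
  proof (cases "i < length u")
    case True thus ?thesis by (simp add: nth_append)
  next
    case False
    hence "i - length u < k * length u" using Suc(2) by simp
    from Suc(1)[OF this] False show ?thesis
      by (simp add: nth_append le_mod_geq)
  qed
qed simp

lemma concat_rep_rep: "concat (replicate k (concat (replicate j v))) = concat (replicate (k*j) v)"
  by (induct k) (auto simp: replicate_add)

lemma prime_nonempty: "prime_word w \<Longrightarrow> w \<noteq> []"
  unfolding prime_word_def by (metis concat_replicate_trivial le_refl one_add_one)

lemma per_ray_rep: assumes "k \<ge> 1" "u \<noteq> []"
  shows "per_ray (concat (replicate k u)) = per_ray u"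
proof
  fix i
  have "i mod (k * length u) < k * length u" using assms by simp
  thus "per_ray (concat (replicate k u)) i = per_ray u i"
    unfolding per_ray_def by (simp add: nth_concat_rep mod_mod_cancel)
qed

lemma primitive_root: "w \<noteq> [] \<Longrightarrow> \<exists>u k. prime_word u \<and> k \<ge> 1 \<and> w = concat (replicate k u)"
proof (induct "length w" arbitrary: w rule: less_induct)
  case less
  show ?case
  proof (cases "prime_word w")
    case True thus ?thesis by (intro exI[of _ w] exI[of _ 1]) auto
  next
    case False
    then obtain u k where k: "k \<ge> 2" and w: "w = concat (replicate k u)"
      unfolding prime_word_def by auto
    have u: "u \<noteq> []" using less(2) w by auto
    have "length u < length w" using k u w by (simp add: less_le_trans[of _ "2 * length u"])
    from less(1)[OF this u] obtain v j where "prime_word v" "j \<ge> 1" "u = concat (replicate j v)"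
      by auto
    thus ?thesis using w k concat_rep_rep[of k j v]
      by (intro exI[of _ v] exI[of _ "k*j"]) auto
  qed
qed

lemma rotate_self: assumes P: "prime_word w" and R: "rotate k w = w"
  shows "k mod length w = 0"
proof (rule ccontr)
  define d where "d = length w"
  define k' where "k' = k mod d"
  assume "k mod length w \<noteq> 0"
  hence k0: "k' \<noteq> 0" by (simp add: k'_def d_def)
  have d0: "d > 0" using prime_nonempty[OF P] by (simp add: d_def)
  have kd: "k' < d" using d0 by (simp add: k'_def)
  have R': "rotate k' w = w" using R by (metis rotate_conv_mod k'_def d_def)
  define f where "f i = w ! (i mod d)" for i
  have f1: "f (i + k') = f i" for i
  proof -
    have "f i = rotate k' w ! (i mod d)" using R' by (simp add: f_def)
    also have "\<dots> = w ! ((k' + i mod d) mod d)" using d0 by (simp add: nth_rotate d_def)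
    also have "\<dots> = f (i + k')" unfolding f_def by (metis mod_add_right_eq add.commute)
    finally show ?thesis by simp
  qed
  have ft: "f (i + t * k') = f i" for i t
  proof (induct t)
    case (Suc t)
    have "f (i + Suc t * k') = f ((i + t * k') + k')" by (simp add: ac_simps)
    also have "\<dots> = f (i + t * k')" by (rule f1)
    finally show ?case using Suc by simp
  qed simp
  have fd: "f (i + t * d) = f i" for i t by (simp add: f_def)
  define g where "g = gcd k' d"
  obtain a b where ab: "k' * a = d * b + g" using bezout_nat[OF k0, of d] g_def by auto
  have fg: "f (i + g) = f i" for i
  proof -
    have "f (i + g) = f (i + g + b * d)" using fd[of "i + g" b] by simp
    also have "\<dots> = f (i + a * k')" using ab by (simp add: ac_simps)
    also have "\<dots> = f i" by (rule ft)
    finally show ?thesis .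
  qed
  have fgt: "f (i + t * g) = f i" for i t
  proof (induct t)
    case (Suc t)
    have "f (i + Suc t * g) = f ((i + t * g) + g)" by (simp add: ac_simps)
    also have "\<dots> = f (i + t * g)" by (rule fg)
    finally show ?case using Suc by simp
  qed simp
  have g0: "g > 0" using k0 by (simp add: g_def)
  have gk: "g \<le> k'" using k0 by (simp add: g_def gcd_le1_nat)
  have gd: "g dvd d" by (simp add: g_def)
  then obtain q where q: "d = g * q" by auto
  have q2: "q \<ge> 2"
  proof (rule ccontr)
    assume "\<not> q \<ge> 2"
    hence "q = 0 \<or> q = 1" by auto
    thus False using q d0 gk kd by auto
  qed
  have "w = concat (replicate q (take g w))"
  proof (rule nth_equalityI)
    have lt: "length (take g w) = g" using gk kd by (simp add: d_def[symmetric] min_def)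
    show "length w = length (concat (replicate q (take g w)))"
      using q lt by (simp add: d_def[symmetric] mult.commute)
    fix i assume i: "i < length w"
    have "concat (replicate q (take g w)) ! i = take g w ! (i mod g)"
      using i q lt by (subst nth_concat_rep) (auto simp: d_def[symmetric] mult.commute)
    also have "\<dots> = w ! (i mod g)" using g0 by simp
    also have "\<dots> = f (i mod g)"
    proof -
      have "i mod g < g" using g0 by simp
      hence "i mod g < d" using gk kd by linarith
      thus ?thesis by (simp add: f_def)
    qed
    also have "\<dots> = f (i mod g + (i div g) * g)" by (rule fgt[symmetric])
    also have "\<dots> = w ! i" using i by (simp add: f_def d_def)
    finally show "w ! i = concat (replicate q (take g w)) ! i" by simp
  qed
  thus False using P q2 unfolding prime_word_def by blast
qed

lemma rotate_inj: assumes P: "prime_word w" and i: "i < length w" and j: "j < length w"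
  and R: "rotate i w = rotate j w" shows "i = j"
proof -
  define d where "d = length w"
  have "rotate (d - j + i) w = rotate (d - j) (rotate i w)" by (simp add: rotate_rotate)
  also have "\<dots> = rotate (d - j) (rotate j w)" using R by simp
  also have "\<dots> = w" using j by (simp add: rotate_rotate d_def)
  finally have "(d - j + i) mod d = 0" using rotate_self[OF P] by (simp add: d_def)
  moreover have "d - j + i < 2 * d" "d - j + i > 0" using i j by (auto simp: d_def)
  ultimately have "d - j + i = d"
  proof -
    assume m: "(d - j + i) mod d = 0" and l: "d - j + i < 2 * d" "d - j + i > 0"
    show ?thesis
    proof (cases "d - j + i < d")
      case True thus ?thesis using m l by simp
    next
      case False
      hence "(d - j + i) mod d = d - j + i - d" using l by (simp add: le_mod_geq)
      thus ?thesis using m l False by linarith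
    qed
  qed
  thus ?thesis using i j by (simp add: d_def)
qed

lemma rotate_eq_nth: assumes "length u = length w" "w \<noteq> []"
  shows "u = rotate k w \<longleftrightarrow> (\<forall>t<length w. u ! t = w ! ((k + t) mod length w))"
  using assms by (auto simp: nth_rotate intro: nth_equalityI)

lemma per_ray_rotate: "w \<noteq> [] \<Longrightarrow> per_ray (rotate j w) = shift_ray j (per_ray w)"
  by (auto simp: per_ray_def shift_ray_def nth_rotate mod_add_right_eq add.commute)


lemma smult_mat_vec: assumes "dim_vec v = dim_col T" shows "(a \<cdot>\<^sub>m T) *\<^sub>v v = a \<cdot>\<^sub>v (T *\<^sub>v v)"
  using assms by (intro eq_vecI) (auto simp: scalar_prod_def sum_distrib_left mult_ac row_def intro!: sum.cong)

lemma pow_smult: fixes T :: "complex mat" assumes T: "T \<in> carrier_mat n n"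
  shows "(a \<cdot>\<^sub>m T) ^\<^sub>m k = (a ^ k) \<cdot>\<^sub>m (T ^\<^sub>m k)"
proof (induct k)
  case 0 show ?case using T by (intro eq_matI) auto
next
  case (Suc k)
  have Tk: "T ^\<^sub>m k \<in> carrier_mat n n" using T by (rule pow_carrier_mat)
  have "(a \<cdot>\<^sub>m T) ^\<^sub>m Suc k = ((a ^ k) \<cdot>\<^sub>m (T ^\<^sub>m k)) * (a \<cdot>\<^sub>m T)" using Suc by simp
  also have "\<dots> = (a ^ k) \<cdot>\<^sub>m ((T ^\<^sub>m k) * (a \<cdot>\<^sub>m T))"
    by (rule mult_smult_assoc_mat[OF Tk, of _ n]) (use T in simp)
  also have "\<dots> = (a ^ k) \<cdot>\<^sub>m (a \<cdot>\<^sub>m (T ^\<^sub>m k * T))"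
    using mult_smult_distrib[OF Tk T, of a] by simp
  also have "\<dots> = (a ^ Suc k) \<cdot>\<^sub>m (T ^\<^sub>m Suc k)"
    by (intro eq_matI) auto
  finally show ?case .
qed

lemma sqrt_sum_le: fixes a :: "nat \<Rightarrow> real" assumes a: "\<And>i. a i \<ge> 0"
  shows "sqrt (\<Sum>i<n. (a i)^2) \<le> (\<Sum>i<n. a i)"
proof -
  have "(\<Sum>i<n. (a i)^2) \<le> (\<Sum>i<n. a i)^2"
  proof (induct n)
    case (Suc n)
    define S where "S = (\<Sum>i<n. a i)"
    have s: "S \<ge> 0" using a by (simp add: sum_nonneg S_def)
    have "(\<Sum>i<Suc n. (a i)^2) = (\<Sum>i<n. (a i)^2) + (a n)^2" by simp
    also have "\<dots> \<le> S^2 + (a n)^2" using Suc by (simp add: S_def)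
    also have "\<dots> \<le> (S + a n)^2"
    proof -
      have "0 \<le> 2 * S * a n" using s a[of n] by simp
      thus ?thesis by (simp add: power2_sum)
    qed
    also have "S + a n = (\<Sum>i<Suc n. a i)" by (simp add: S_def)
    finally show ?case .
  qed simp
  hence "sqrt (\<Sum>i<n. (a i)^2) \<le> sqrt ((\<Sum>i<n. a i)^2)" by (rule real_sqrt_le_mono)
  also have "\<dots> = (\<Sum>i<n. a i)" using a by (simp add: sum_nonneg)
  finally show ?thesis .
qed

lemma vnorm_le_sum: "vnorm v \<le> (\<Sum>i<dim_vec v. cmod (v $ i))"
  unfolding vnorm_def by (rule sqrt_sum_le) simp

lemma mat_vec_index: "M \<in> carrier_mat r c \<Longrightarrow> x \<in> carrier_vec c \<Longrightarrow> i < r \<Longrightarrow>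
   (M *\<^sub>v x) $ i = (\<Sum>j<c. M $$ (i,j) * x $ j)"
  by (auto simp: scalar_prod_def row_def atLeast0LessThan intro!: sum.cong)

lemma exists_ev: fixes T :: "complex mat"
  assumes T: "T \<in> carrier_mat n n" and x: "x \<in> carrier_vec n" "x \<noteq> 0\<^sub>v n"
  and iso: "\<And>k. vnorm (T ^\<^sub>m k *\<^sub>v x) = vnorm x"
  shows "\<exists>lam v. eigenvector T v lam \<and> cmod lam \<ge> 1"
proof (rule ccontr)
  assume "\<not> ?thesis"
  hence small: "\<And>lam v. eigenvector T v lam \<Longrightarrow> cmod lam < 1" by force
  have n0: "n > 0" using x by (cases n) auto
  define \<rho> where "\<rho> = spectral_radius T"
  from spectral_radius_mem_max(1)[OF T n0] obtain l where l: "l \<in> spectrum T" "\<rho> = cmod l"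
    unfolding \<rho>_def by auto
  have \<rho>1: "\<rho> < 1" using l small unfolding spectrum_def eigenvalue_def by auto
  have \<rho>0: "\<rho> \<ge> 0" using l by simp
  define s :: real where "s = 2 / (1 + \<rho>)"
  have s1: "s > 1" using \<rho>1 \<rho>0 by (simp add: s_def field_simps)
  have s\<rho>: "s * \<rho> < 1" using \<rho>1 \<rho>0 by (simp add: s_def field_simps)
  define S where "S = complex_of_real s \<cdot>\<^sub>m T"
  have S: "S \<in> carrier_mat n n" using T by (simp add: S_def)
  have "spectral_radius S < 1"
  proof -
    from spectral_radius_mem_max(1)[OF S n0] obtain mu where mu: "mu \<in> spectrum S"
      "spectral_radius S = cmod mu" by auto
    then obtain v where v: "eigenvector S v mu" unfolding spectrum_def eigenvalue_def by auto
    have "eigenvector T v (mu / complex_of_real s)"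
    proof -
      have "S *\<^sub>v v = mu \<cdot>\<^sub>v v" using v by (simp add: eigenvector_def)
      moreover have "dim_vec v = dim_col T" using v S T by (auto simp: eigenvector_def)
      ultimately have "complex_of_real s \<cdot>\<^sub>v (T *\<^sub>v v) = mu \<cdot>\<^sub>v v" by (simp add: S_def smult_mat_vec)
      hence "(1 / complex_of_real s) \<cdot>\<^sub>v (complex_of_real s \<cdot>\<^sub>v (T *\<^sub>v v)) = (1 / complex_of_real s) \<cdot>\<^sub>v (mu \<cdot>\<^sub>v v)"
        by simp
      hence "T *\<^sub>v v = (mu / complex_of_real s) \<cdot>\<^sub>v v" using s1 by (simp add: smult_smult_assoc)
      thus ?thesis using v S T by (auto simp: eigenvector_def)
    qed
    hence "cmod (mu / complex_of_real s) \<in> norm ` spectrum T"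
      unfolding spectrum_def eigenvalue_def by auto
    from spectral_radius_mem_max(2)[OF T n0 this] have "cmod mu / s \<le> \<rho>"
      using s1 by (simp add: \<rho>_def norm_divide)
    hence "cmod mu \<le> s * \<rho>" using s1 by (simp add: field_simps)
    thus ?thesis using mu s\<rho> by simp
  qed
  from spectral_radius_jnf_norm_bound_less_1_upper_triangular[OF S this]
  obtain c where c: "\<And>k. norm_bound (S ^\<^sub>m k) c" by auto
  define M where "M = (\<Sum>j<n. cmod (x $ j))"
  have ent: "cmod ((T ^\<^sub>m k) $$ (i,j)) \<le> c / s ^ k" if "i < n" "j < n" for i j k
  proof -
    have "norm ((S ^\<^sub>m k) $$ (i,j)) \<le> c" using c[of k] that S unfolding norm_bound_def by auto
    moreover have "(S ^\<^sub>m k) $$ (i,j) = complex_of_real (s ^ k) * (T ^\<^sub>m k) $$ (i,j)"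
      using that T by (simp add: S_def pow_smult[OF T])
    moreover have "cmod (complex_of_real s ^ k) = s ^ k" using s1 by (simp add: norm_power)
    ultimately have "s ^ k * cmod ((T ^\<^sub>m k) $$ (i,j)) \<le> c" by (simp add: norm_mult)
    thus ?thesis using s1 by (simp add: field_simps)
  qed
  have bound: "vnorm x \<le> n * (c / s ^ k) * M" for k
  proof -
    have Tk: "T ^\<^sub>m k \<in> carrier_mat n n" using T by (rule pow_carrier_mat)
    have comp: "cmod ((T ^\<^sub>m k *\<^sub>v x) $ i) \<le> (c / s ^ k) * M" if i: "i < n" for i
    proof -
      have "(T ^\<^sub>m k *\<^sub>v x) $ i = (\<Sum>j<n. (T ^\<^sub>m k) $$ (i,j) * x $ j)"
        using Tk x(1) i by (rule mat_vec_index)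
      hence "cmod ((T ^\<^sub>m k *\<^sub>v x) $ i) \<le> (\<Sum>j<n. cmod ((T ^\<^sub>m k) $$ (i,j)) * cmod (x $ j))"
        using norm_sum[of "\<lambda>j. (T ^\<^sub>m k) $$ (i,j) * x $ j" "{..<n}"] by (simp add: norm_mult)
      also have "\<dots> \<le> (\<Sum>j<n. (c / s ^ k) * cmod (x $ j))"
      proof (rule sum_mono)
        fix j assume "j \<in> {..<n}"
        hence "cmod ((T ^\<^sub>m k) $$ (i,j)) \<le> c / s ^ k" using ent i by auto
        thus "cmod ((T ^\<^sub>m k) $$ (i,j)) * cmod (x $ j) \<le> (c / s ^ k) * cmod (x $ j)"
          by (rule mult_right_mono) simp
      qed
      also have "\<dots> = (c / s ^ k) * M" by (simp add: M_def sum_distrib_left)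
      finally show ?thesis .
    qed
    have "vnorm x = vnorm (T ^\<^sub>m k *\<^sub>v x)" using iso by simp
    also have "\<dots> \<le> (\<Sum>i<n. cmod ((T ^\<^sub>m k *\<^sub>v x) $ i))" using vnorm_le_sum Tk by (metis carrier_matD(1) dim_mult_mat_vec)
    also have "\<dots> \<le> (\<Sum>i<n. (c / s ^ k) * M)" by (rule sum_mono) (use comp in auto)
    also have "\<dots> = n * (c / s ^ k) * M" by simp
    finally show ?thesis .
  qed
  have "vnorm x \<noteq> 0" using x vnorm_zero_iff by blast
  hence vx: "vnorm x > 0" using vnorm_ge0[of x] by linarith
  obtain k where k: "n * c * M / vnorm x < s ^ k" using real_arch_pow[OF s1] by blast
  have "vnorm x \<le> n * c * M / s ^ k" using bound[of k] by simp
  hence "vnorm x * s ^ k \<le> n * c * M" using s1 by (simp add: field_simps)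
  moreover have "n * c * M < s ^ k * vnorm x" using k vx by (simp add: field_simps)
  ultimately show False by (simp add: mult.commute)
qed


lemma csubspace_carrier: "csubspace n (carrier_vec n)"
  by (auto simp: csubspace_def)

lemma csubspace_zero: "csubspace n {0\<^sub>v n}"
  by (auto simp: csubspace_def)

lemma cspan_sub: "S \<subseteq> cspan n S" by (auto simp: cspan_def)

lemma cspan_least: "csubspace n V \<Longrightarrow> S \<subseteq> V \<Longrightarrow> cspan n S \<subseteq> V"
  by (auto simp: cspan_def)

lemma cspan_csubspace: assumes "S \<subseteq> carrier_vec n" shows "csubspace n (cspan n S)"
proof -
  let ?F = "{V. csubspace n V \<and> S \<subseteq> V}"
  have ne: "carrier_vec n \<in> ?F" using assms csubspace_carrier by auto
  have 1: "\<Inter> ?F \<subseteq> carrier_vec n" using ne by auto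
  have 2: "0\<^sub>v n \<in> \<Inter> ?F" by (auto simp: csubspace_def)
  have 3: "\<forall>x\<in>\<Inter> ?F. \<forall>y\<in>\<Inter> ?F. x + y \<in> \<Inter> ?F" by (auto simp: csubspace_def)
  have 4: "\<forall>c. \<forall>x\<in>\<Inter> ?F. c \<cdot>\<^sub>v x \<in> \<Inter> ?F" by (auto simp: csubspace_def)
  show ?thesis unfolding cspan_def csubspace_def[of n "\<Inter> ?F"] by (intro conjI 1 2 3 4)
qed

lemma cspan_carrier: "S \<subseteq> carrier_vec n \<Longrightarrow> cspan n S \<subseteq> carrier_vec n"
  by (rule cspan_least[OF csubspace_carrier])

lemma cspan_empty: "cspan n {} = {0\<^sub>v n}"
proof
  show "cspan n {} \<subseteq> {0\<^sub>v n}" by (rule cspan_least[OF csubspace_zero]) auto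
  show "{0\<^sub>v n} \<subseteq> cspan n {}" using cspan_csubspace[of "{}" n] by (auto simp: csubspace_def)
qed

lemma csub_units: assumes V: "csubspace n V" and U: "\<And>k. k < n \<Longrightarrow> unit_vec n k \<in> V"
  shows "carrier_vec n \<subseteq> V"
proof
  fix x :: "complex vec" assume x: "x \<in> carrier_vec n"
  have "vec n (\<lambda>j. if j < s then x $ j else 0) \<in> V" for s
  proof (induct s)
    case 0
    have "vec n (\<lambda>j. if j < 0 then x $ j else 0) = 0\<^sub>v n" by auto
    thus ?case using V by (simp add: csubspace_def)
  next
    case (Suc s)
    show ?case
    proof (cases "s < n")
      case True
      have "vec n (\<lambda>j. if j < Suc s then x $ j else 0) =
          vec n (\<lambda>j. if j < s then x $ j else 0) + (x $ s) \<cdot>\<^sub>v unit_vec n s"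
        using True by (intro eq_vecI) (auto simp: less_Suc_eq)
      moreover have "(x $ s) \<cdot>\<^sub>v unit_vec n s \<in> V" using V U True by (simp add: csubspace_def)
      ultimately show ?thesis using Suc V by (simp add: csubspace_def)
    next
      case False
      have "vec n (\<lambda>j. if j < Suc s then x $ j else 0) = vec n (\<lambda>j. if j < s then x $ j else 0)"
        using False by (intro eq_vecI) auto
      thus ?thesis using Suc by simp
    qed
  qed
  moreover have "vec n (\<lambda>j. if j < n then x $ j else 0) = x" using x by (intro eq_vecI) auto
  ultimately show "x \<in> V" by metis
qed

definition tr :: "complex mat \<Rightarrow> complex" where
  "tr M = (\<Sum>i<dim_row M. M $$ (i,i))"

lemma tr_swap: assumes X: "X \<in> carrier_mat r c" and Y: "Y \<in> carrier_mat c r"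
  shows "tr (X * Y) = tr (Y * X)"
proof -
  have "tr (X * Y) = (\<Sum>i<r. \<Sum>j<c. X $$ (i,j) * Y $$ (j,i))"
    using X Y by (simp add: tr_def scalar_prod_def row_def col_def atLeast0LessThan)
  also have "\<dots> = (\<Sum>j<c. \<Sum>i<r. Y $$ (j,i) * X $$ (i,j))"
    by (subst sum.swap) (simp add: mult.commute)
  also have "\<dots> = tr (Y * X)"
    using X Y by (simp add: tr_def scalar_prod_def row_def col_def atLeast0LessThan)
  finally show ?thesis .
qed

lemma tr_one: "tr (1\<^sub>m n) = of_nat n"
  by (simp add: tr_def)

lemma mat_vec_unit: fixes M :: "complex mat" assumes M: "M \<in> carrier_mat r c" and k: "k < c" and j: "j < r"
  shows "(M *\<^sub>v unit_vec c k) $ j = M $$ (j,k)"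
proof -
  have "(M *\<^sub>v unit_vec c k) $ j = (\<Sum>l<c. M $$ (j,l) * unit_vec c k $ l)"
    using mat_vec_index[OF M unit_vec_carrier j] .
  also have "\<dots> = (\<Sum>l<c. if l = k then M $$ (j,k) else 0)"
    using k by (intro sum.cong) auto
  also have "\<dots> = M $$ (j,k)" using k by simp
  finally show ?thesis .
qed

lemma mat_vec_units: fixes M :: "complex mat" assumes M: "M \<in> carrier_mat r c" and x: "x \<in> carrier_vec c" and j: "j < r"
  shows "(M *\<^sub>v x) $ j = (\<Sum>k<c. (M *\<^sub>v unit_vec c k) $ j * x $ k)"
proof -
  have "(M *\<^sub>v x) $ j = (\<Sum>k<c. M $$ (j,k) * x $ k)" by (rule mat_vec_index[OF M x j])
  also have "\<dots> = (\<Sum>k<c. (M *\<^sub>v unit_vec c k) $ j * x $ k)"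
    by (rule sum.cong[OF refl]) (subst mat_vec_unit[OF M _ j]; simp)
  finally show ?thesis .
qed

lemma tr_units: assumes M: "M \<in> carrier_mat n n"
  shows "tr M = (\<Sum>k<n. (M *\<^sub>v unit_vec n k) $ k)"
  unfolding tr_def using M
  by (intro sum.cong) (auto simp del: index_mult_mat_vec simp: mat_vec_unit[OF M])

fun matw :: "nat \<Rightarrow> complex mat \<Rightarrow> complex mat \<Rightarrow> bool list \<Rightarrow> complex mat" where
  "matw n A B [] = 1\<^sub>m n"
| "matw n A B (b # u) = matw n A B u * op A B b"

lemma matw_carrier: "A \<in> carrier_mat n n \<Longrightarrow> B \<in> carrier_mat n n \<Longrightarrow> matw n A B u \<in> carrier_mat n n"
  by (induct u) (auto simp: op_def)

lemma act_matw: assumes A: "A \<in> carrier_mat n n" and B: "B \<in> carrier_mat n n"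
  shows "x \<in> carrier_vec n \<Longrightarrow> act A B u x = matw n A B u *\<^sub>v x"
proof (induct u arbitrary: x)
  case (Cons b u)
  have O: "op A B b \<in> carrier_mat n n" using A B by (simp add: op_def)
  have "act A B (b # u) x = matw n A B u *\<^sub>v (op A B b *\<^sub>v x)"
    using Cons O by simp
  also have "\<dots> = matw n A B (b # u) *\<^sub>v x"
    using assoc_mult_mat_vec[OF matw_carrier[OF A B] O Cons(2)] by simp
  finally show ?case .
qed simp

lemma matw_intertwine: assumes A: "A \<in> carrier_mat n n" and B: "B \<in> carrier_mat n n"
  and A': "A' \<in> carrier_mat m m" and B': "B' \<in> carrier_mat m m" and U: "U \<in> carrier_mat m n"
  and iA: "U * A = A' * U" and iB: "U * B = B' * U"
  shows "U * matw n A B u = matw m A' B' u * U"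
proof (induct u)
  case Nil show ?case using U by simp
next
  case (Cons b u)
  have O: "op A B b \<in> carrier_mat n n" "op A' B' b \<in> carrier_mat m m" using A B A' B' by (auto simp: op_def)
  have iO: "U * op A B b = op A' B' b * U" using iA iB by (simp add: op_def)
  have M: "matw n A B u \<in> carrier_mat n n" "matw m A' B' u \<in> carrier_mat m m"
    using matw_carrier A B A' B' by auto
  have "U * matw n A B (b # u) = (U * matw n A B u) * op A B b"
    using U M O by simp
  also have "\<dots> = matw m A' B' u * (U * op A B b)" using Cons U M O by simp
  also have "\<dots> = matw m A' B' u * (op A' B' b * U)" using iO by simp
  also have "\<dots> = matw m A' B' (b # u) * U" using U M O by simp
  finally show ?case .
qed

lemma act_smult: "A \<in> carrier_mat n n \<Longrightarrow> B \<in> carrier_mat n n \<Longrightarrow> x \<in> carrier_vec n \<Longrightarrow>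
   act A B u (c \<cdot>\<^sub>v x) = c \<cdot>\<^sub>v act A B u x"
  by (simp add: act_matw mult_mat_vec[OF matw_carrier])

lemma act_zero: "A \<in> carrier_mat n n \<Longrightarrow> B \<in> carrier_mat n n \<Longrightarrow> act A B u (0\<^sub>v n) = 0\<^sub>v n"
  by (simp add: act_matw matw_carrier)


definition dd :: "nat \<Rightarrow> complex \<Rightarrow> nat \<Rightarrow> complex" where
  "dd d \<phi> k = (if k = d - 1 then \<phi> else 1)"

definition mA :: "bool list \<Rightarrow> complex \<Rightarrow> complex mat" where
  "mA w \<phi> = A_w w * D_phi (length w) \<phi>"
definition mB :: "bool list \<Rightarrow> complex \<Rightarrow> complex mat" where
  "mB w \<phi> = B_w w * D_phi (length w) \<phi>"

lemma suc_mod_inj: "i < d \<Longrightarrow> k < d \<Longrightarrow> (Suc i mod d = Suc k mod d) = (i = k)"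
proof -
  assume i: "i < d" and k: "k < d"
  have a: "Suc i mod d = (if Suc i = d then 0 else Suc i)" using i by auto
  have b: "Suc k mod d = (if Suc k = d then 0 else Suc k)" using k by auto
  show ?thesis unfolding a b by auto
qed

lemma mA_carrier[simp]: "mA w \<phi> \<in> carrier_mat (length w) (length w)"
  unfolding carrier_mat_def by (simp add: mA_def A_w_def D_phi_def)
lemma mB_carrier[simp]: "mB w \<phi> \<in> carrier_mat (length w) (length w)"
  unfolding carrier_mat_def by (simp add: mB_def B_w_def D_phi_def)

lemma dim_mAB[simp]: "dim_row (mA w \<phi>) = length w" "dim_col (mA w \<phi>) = length w"
  "dim_row (mB w \<phi>) = length w" "dim_col (mB w \<phi>) = length w"
  using carrier_matD[OF mA_carrier[of w \<phi>]] carrier_matD[OF mB_carrier[of w \<phi>]] by auto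

lemma mult_D_entry: assumes X: "X \<in> carrier_mat d d" and j: "j < d" and k: "k < d"
  shows "(X * D_phi d \<phi>) $$ (j,k) = X $$ (j,k) * dd d \<phi> k"
proof -
  have "(X * D_phi d \<phi>) $$ (j,k) = (\<Sum>l<d. X $$ (j,l) * D_phi d \<phi> $$ (l,k))"
    using X j k by (simp add: D_phi_def scalar_prod_def row_def col_def atLeast0LessThan)
  also have "\<dots> = (\<Sum>l<d. if l = k then X $$ (j,k) * dd d \<phi> k else 0)"
    using k by (intro sum.cong) (auto simp: D_phi_def dd_def)
  also have "\<dots> = X $$ (j,k) * dd d \<phi> k" using k by simp
  finally show ?thesis .
qed

lemma op_entry: assumes j: "j < length w" and k: "k < length w"
  shows "op (mA w \<phi>) (mB w \<phi>) b $$ (j,k) =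
    (if j = Suc k mod length w \<and> w ! k = b then dd (length w) \<phi> k else 0)"
proof (cases b)
  case True
  have "B_w w \<in> carrier_mat (length w) (length w)" by (simp add: B_w_def)
  thus ?thesis using True j k by (simp add: op_def mB_def mult_D_entry B_w_def)
next
  case False
  have "A_w w \<in> carrier_mat (length w) (length w)" by (simp add: A_w_def)
  thus ?thesis using False j k by (simp add: op_def mA_def mult_D_entry A_w_def)
qed

lemma op_carrier: "op (mA w \<phi>) (mB w \<phi>) b \<in> carrier_mat (length w) (length w)"
  by (simp add: op_def)

lemma op_unit: assumes k: "k < length w"
  shows "op (mA w \<phi>) (mB w \<phi>) b *\<^sub>v unit_vec (length w) k =
    (if w ! k = b then dd (length w) \<phi> k \<cdot>\<^sub>v unit_vec (length w) (Suc k mod length w)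
     else 0\<^sub>v (length w))"
proof (rule eq_vecI)
  have d0: "length w > 0" using k by arith
  fix j assume "j < dim_vec (if w ! k = b then dd (length w) \<phi> k \<cdot>\<^sub>v unit_vec (length w) (Suc k mod length w)
     else 0\<^sub>v (length w))"
  hence j: "j < length w" by (auto split: if_splits)
  show "(op (mA w \<phi>) (mB w \<phi>) b *\<^sub>v unit_vec (length w) k) $ j =
    (if w ! k = b then dd (length w) \<phi> k \<cdot>\<^sub>v unit_vec (length w) (Suc k mod length w)
     else 0\<^sub>v (length w)) $ j"
    using mat_vec_unit[OF op_carrier k j] op_entry[OF j k] d0 j by auto
qed (auto simp: op_def)

lemma adjXX: fixes X :: "complex mat"
  assumes X: "X \<in> carrier_mat d d"
  and E: "\<And>j k. j < d \<Longrightarrow> k < d \<Longrightarrow> X $$ (j,k) = (if j = Suc k mod d \<and> P k then c k else 0)"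
  and i: "i < d" and k: "k < d"
  shows "(adj X * X) $$ (i,k) = (if i = k \<and> P k then cnj (c k) * c k else 0)"
proof -
  have "(adj X * X) $$ (i,k) = (\<Sum>j<d. cnj (X $$ (j,i)) * X $$ (j,k))"
    using X i k by (simp add: adj_def scalar_prod_def row_def col_def atLeast0LessThan)
  also have "\<dots> = (\<Sum>j<d. if j = Suc k mod d then (if i = k \<and> P k then cnj (c k) * c k else 0) else 0)"
    using i k suc_mod_inj[OF i k] by (intro sum.cong) (auto simp: E)
  also have "\<dots> = (if i = k \<and> P k then cnj (c k) * c k else 0)" using k by simp
  finally show ?thesis .
qed

lemma dd_norm: "cmod \<phi> = 1 \<Longrightarrow> cmod (dd d \<phi> k) = 1" by (simp add: dd_def)

lemma cnj_mult_norm1: "cmod z = 1 \<Longrightarrow> cnj z * z = 1"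
  by (metis complex_norm_square mult.commute of_real_1 power_one)

lemma mw_pmodule: assumes w: "w \<noteq> []" and \<phi>: "cmod \<phi> = 1"
  shows "pmodule (length w) (mA w \<phi>) (mB w \<phi>)"
  unfolding pmodule_def
proof (intro conjI)
  let ?d = "length w"
  show "adj (mA w \<phi>) * mA w \<phi> + adj (mB w \<phi>) * mB w \<phi> = 1\<^sub>m ?d"
  proof (rule eq_matI)
    fix i k assume "i < dim_row (1\<^sub>m ?d :: complex mat)" "k < dim_col (1\<^sub>m ?d :: complex mat)"
    hence i: "i < ?d" and k: "k < ?d" by auto
    have a: "(adj (mA w \<phi>) * mA w \<phi>) $$ (i,k) = (if i = k \<and> \<not> w ! k then cnj (dd ?d \<phi> k) * dd ?d \<phi> k else 0)"
      by (rule adjXX[OF mA_carrier _ i k]) (use op_entry[of _ w _ \<phi> False] in \<open>simp add: op_def\<close>)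
    have b: "(adj (mB w \<phi>) * mB w \<phi>) $$ (i,k) = (if i = k \<and> w ! k then cnj (dd ?d \<phi> k) * dd ?d \<phi> k else 0)"
      by (rule adjXX[OF mB_carrier _ i k]) (use op_entry[of _ w _ \<phi> True] in \<open>simp add: op_def\<close>)
    have c: "cnj (dd ?d \<phi> k) * dd ?d \<phi> k = 1" by (rule cnj_mult_norm1[OF dd_norm[OF \<phi>]])
    have cA: "adj (mA w \<phi>) * mA w \<phi> \<in> carrier_mat ?d ?d" "adj (mB w \<phi>) * mB w \<phi> \<in> carrier_mat ?d ?d"
      by (meson adj_carrier mult_carrier_mat mA_carrier mB_carrier)+
    show "(adj (mA w \<phi>) * mA w \<phi> + adj (mB w \<phi>) * mB w \<phi>) $$ (i,k) = 1\<^sub>m ?d $$ (i,k)"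
      using index_add_mat(1)[of i "adj (mB w \<phi>) * mB w \<phi>" k "adj (mA w \<phi>) * mA w \<phi>"] i k a b c by auto
  qed (auto)
qed auto

definition matchw :: "bool list \<Rightarrow> nat \<Rightarrow> bool list \<Rightarrow> bool" where
  "matchw w k u \<longleftrightarrow> (\<forall>t<length u. u ! t = w ! ((k + t) mod length w))"

definition ph :: "bool list \<Rightarrow> complex \<Rightarrow> nat \<Rightarrow> bool list \<Rightarrow> complex" where
  "ph w \<phi> k u = (\<Prod>t<length u. dd (length w) \<phi> ((k + t) mod length w))"

lemma matchw_Cons: assumes k: "k < length w"
  shows "matchw w k (b # u) \<longleftrightarrow> w ! k = b \<and> matchw w (Suc k mod length w) u"
proof -
  have e: "(Suc k mod length w + t) mod length w = (k + Suc t) mod length w" for t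
    by (simp add: mod_add_left_eq)
  show ?thesis unfolding matchw_def using k
    by (auto simp: e All_less_Suc2)
qed

lemma ph_Cons: assumes k: "k < length w"
  shows "ph w \<phi> k (b # u) = dd (length w) \<phi> k * ph w \<phi> (Suc k mod length w) u"
proof -
  have e: "(Suc k mod length w + t) mod length w = (k + Suc t) mod length w" for t
    by (simp add: mod_add_left_eq)
  show ?thesis unfolding ph_def length_Cons prod.lessThan_Suc_shift using k by (simp add: e del: prod.lessThan_Suc)
qed

lemma act_unit: assumes k: "k < length w"
  shows "act (mA w \<phi>) (mB w \<phi>) u (unit_vec (length w) k) =
    (if matchw w k u then ph w \<phi> k u \<cdot>\<^sub>v unit_vec (length w) ((k + length u) mod length w)
     else 0\<^sub>v (length w))"
  using k
proof (induct u arbitrary: k)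
  case Nil
  show ?case using Nil by (auto simp: matchw_def ph_def intro!: eq_vecI)
next
  case (Cons b u)
  let ?d = "length w"
  let ?k' = "Suc k mod ?d"
  have k': "?k' < ?d" using Cons(2) by (intro mod_less_divisor) arith
  have idx: "(?k' + length u) mod ?d = (k + length (b # u)) mod ?d" by (simp add: mod_add_left_eq)
  show ?case
  proof (cases "w ! k = b")
    case True
    have "act (mA w \<phi>) (mB w \<phi>) (b # u) (unit_vec ?d k)
       = act (mA w \<phi>) (mB w \<phi>) u (dd ?d \<phi> k \<cdot>\<^sub>v unit_vec ?d ?k')"
      using op_unit[OF Cons(2), of \<phi> b] True by simp
    also have "\<dots> = dd ?d \<phi> k \<cdot>\<^sub>v act (mA w \<phi>) (mB w \<phi>) u (unit_vec ?d ?k')"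
      by (rule act_smult[OF mA_carrier mB_carrier unit_vec_carrier])
    also have "\<dots> = (if matchw w k (b # u) then ph w \<phi> k (b # u) \<cdot>\<^sub>v unit_vec ?d ((k + length (b # u)) mod ?d)
     else 0\<^sub>v ?d)"
      unfolding Cons(1)[OF k'] matchw_Cons[OF Cons(2)] ph_Cons[OF Cons(2)] idx
      using True by (auto simp: smult_smult_assoc)
    finally show ?thesis .
  next
    case False
    have "act (mA w \<phi>) (mB w \<phi>) (b # u) (unit_vec ?d k) = act (mA w \<phi>) (mB w \<phi>) u (0\<^sub>v ?d)"
      using op_unit[OF Cons(2), of \<phi> b] False by simp
    also have "\<dots> = 0\<^sub>v ?d" by (rule act_zero[OF mA_carrier mB_carrier])
    finally show ?thesis using False matchw_Cons[OF Cons(2)] by simp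
  qed
qed

lemma ph_norm: "cmod \<phi> = 1 \<Longrightarrow> cmod (ph w \<phi> k u) = 1"
  unfolding ph_def by (simp add: prod_norm[symmetric] dd_norm)

lemma vnorm_unit: assumes j: "j < n" shows "vnorm (c \<cdot>\<^sub>v unit_vec n j) = cmod c"
proof -
  have "(vnorm (c \<cdot>\<^sub>v unit_vec n j))^2 = (\<Sum>i<n. if i = j then (cmod c)^2 else 0)"
    unfolding vnorm_sq using j by (intro sum.cong) (auto simp: unit_vec_def)
  also have "\<dots> = (cmod c)^2" using j by simp
  finally show ?thesis using vnorm_ge0 by (metis norm_ge_zero power2_eq_iff_nonneg)
qed


lemma act_closed: assumes S: "Defs.submodule n A B V" and x: "x \<in> V"
  shows "act A B u x \<in> V"
  using x
proof (induct u arbitrary: x)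
  case (Cons b u)
  have "op A B b *\<^sub>v x \<in> V" using S Cons(2) by (cases b) (auto simp: Defs.submodule_def op_def)
  thus ?case using Cons(1) by simp
qed simp

lemma match_rotate: assumes P: "prime_word w" and i: "i < length w" and k: "k < length w"
  shows "matchw w k (rotate i w) \<longleftrightarrow> k = i"
proof -
  have w: "w \<noteq> []" using prime_nonempty[OF P] .
  have "matchw w k (rotate i w) \<longleftrightarrow> rotate i w = rotate k w"
    unfolding matchw_def using rotate_eq_nth[of "rotate i w" w k] w by simp
  also have "\<dots> \<longleftrightarrow> k = i" using rotate_inj[OF P i k] by auto
  finally show ?thesis .
qed

lemma act_rotate: assumes P: "prime_word w" and i: "i < length w" and x: "x \<in> carrier_vec (length w)"
  shows "act (mA w \<phi>) (mB w \<phi>) (rotate i w) x = (ph w \<phi> i (rotate i w) * x $ i) \<cdot>\<^sub>v unit_vec (length w) i"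
proof (rule eq_vecI)
  let ?d = "length w" and ?u = "rotate i w"
  let ?M = "matw ?d (mA w \<phi>) (mB w \<phi>) ?u"
  have M: "?M \<in> carrier_mat ?d ?d" by (rule matw_carrier) auto
  have ax: "act (mA w \<phi>) (mB w \<phi>) ?u x = ?M *\<^sub>v x" by (rule act_matw[OF _ _ x]) auto
  show "dim_vec (act (mA w \<phi>) (mB w \<phi>) ?u x) = dim_vec ((ph w \<phi> i ?u * x $ i) \<cdot>\<^sub>v unit_vec ?d i)"
    using ax M by simp
  fix j assume "j < dim_vec ((ph w \<phi> i ?u * x $ i) \<cdot>\<^sub>v unit_vec ?d i)"
  hence j: "j < ?d" by simp
  have "(act (mA w \<phi>) (mB w \<phi>) ?u x) $ j = (\<Sum>k<?d. (?M *\<^sub>v unit_vec ?d k) $ j * x $ k)"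
    unfolding ax by (rule mat_vec_units[OF M x j])
  also have "\<dots> = (\<Sum>k<?d. if k = i then (ph w \<phi> i ?u \<cdot>\<^sub>v unit_vec ?d i) $ j * x $ i else 0)"
  proof (rule sum.cong[OF refl])
    fix k assume "k \<in> {..<?d}"
    hence k: "k < ?d" by simp
    have "?M *\<^sub>v unit_vec ?d k = act (mA w \<phi>) (mB w \<phi>) ?u (unit_vec ?d k)"
      by (rule act_matw[symmetric]) auto
    also have "\<dots> = (if k = i then ph w \<phi> i ?u \<cdot>\<^sub>v unit_vec ?d i else 0\<^sub>v ?d)"
      unfolding act_unit[OF k] match_rotate[OF P i k] using k by auto
    finally show "(?M *\<^sub>v unit_vec ?d k) $ j * x $ k = (if k = i then (ph w \<phi> i ?u \<cdot>\<^sub>v unit_vec ?d i) $ j * x $ i else 0)"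
      using j by auto
  qed
  also have "\<dots> = ((ph w \<phi> i ?u * x $ i) \<cdot>\<^sub>v unit_vec ?d i) $ j" using i j by simp
  finally show "(act (mA w \<phi>) (mB w \<phi>) ?u x) $ j = ((ph w \<phi> i ?u * x $ i) \<cdot>\<^sub>v unit_vec ?d i) $ j" .
qed

lemma mw_irred: assumes P: "prime_word w" and \<phi>: "cmod \<phi> = 1"
  shows "irreducible_pmod (length w) (mA w \<phi>) (mB w \<phi>)"
  unfolding irreducible_pmod_def irred_sub_def
proof (intro conjI allI impI)
  let ?d = "length w"
  have d0: "?d > 0" using prime_nonempty[OF P] by simp
  show "Defs.submodule ?d (mA w \<phi>) (mB w \<phi>) (carrier_vec ?d)"
    unfolding Defs.submodule_def using csubspace_carrier mult_mat_vec_carrier[OF mA_carrier] mult_mat_vec_carrier[OF mB_carrier] by blast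
  show "carrier_vec ?d \<noteq> {0\<^sub>v ?d :: complex vec}"
  proof -
    have "(unit_vec ?d 0 :: complex vec) \<in> carrier_vec ?d" "(unit_vec ?d 0 :: complex vec) \<noteq> 0\<^sub>v ?d"
      using d0 by auto
    thus ?thesis by blast
  qed
  fix V assume H: "Defs.submodule ?d (mA w \<phi>) (mB w \<phi>) V \<and> V \<subseteq> carrier_vec ?d"
  hence S: "Defs.submodule ?d (mA w \<phi>) (mB w \<phi>) V" and VC: "V \<subseteq> carrier_vec ?d" by auto
  have cs: "csubspace ?d V" using S by (simp add: Defs.submodule_def)
  show "V = {0\<^sub>v ?d} \<or> V = carrier_vec ?d"
  proof (cases "V = {0\<^sub>v ?d}")
    case False
    have "0\<^sub>v ?d \<in> V" using cs by (simp add: csubspace_def)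
    then obtain x where xV: "x \<in> V" and x0: "x \<noteq> 0\<^sub>v ?d" using False by blast
    have xc: "x \<in> carrier_vec ?d" using xV VC by auto
    obtain i where i: "i < ?d" and xi: "x $ i \<noteq> 0"
    proof (rule ccontr)
      assume "\<not> thesis"
      hence "\<forall>i<?d. x $ i = 0" using that by blast
      hence "x = 0\<^sub>v ?d" using xc by (intro eq_vecI) auto
      thus False using x0 by simp
    qed
    let ?c = "ph w \<phi> i (rotate i w) * x $ i"
    have c0: "?c \<noteq> 0" using xi ph_norm[OF \<phi>, of w i "rotate i w"] by auto
    have "act (mA w \<phi>) (mB w \<phi>) (rotate i w) x \<in> V" by (rule act_closed[OF S xV])
    hence "?c \<cdot>\<^sub>v unit_vec ?d i \<in> V" using act_rotate[OF P i xc] by simp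
    hence "(1 / ?c) \<cdot>\<^sub>v (?c \<cdot>\<^sub>v unit_vec ?d i) \<in> V" using cs by (simp add: csubspace_def)
    hence ei: "unit_vec ?d i \<in> V" using c0 by (simp add: smult_smult_assoc)
    have et: "unit_vec ?d ((i + t) mod ?d) \<in> V" for t
    proof (induct t)
      case 0 thus ?case using ei i by simp
    next
      case (Suc t)
      let ?j = "(i + t) mod ?d"
      have j: "?j < ?d" using d0 by simp
      have "op (mA w \<phi>) (mB w \<phi>) (w ! ?j) *\<^sub>v unit_vec ?d ?j \<in> V"
        using S Suc by (auto simp: Defs.submodule_def op_def)
      hence "dd ?d \<phi> ?j \<cdot>\<^sub>v unit_vec ?d (Suc ?j mod ?d) \<in> V" using op_unit[OF j] by simp
      hence "(1 / dd ?d \<phi> ?j) \<cdot>\<^sub>v (dd ?d \<phi> ?j \<cdot>\<^sub>v unit_vec ?d (Suc ?j mod ?d)) \<in> V"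
        using cs by (simp add: csubspace_def)
      moreover have "dd ?d \<phi> ?j \<noteq> 0" using dd_norm[OF \<phi>, of ?d ?j] by auto
      ultimately have "unit_vec ?d (Suc ?j mod ?d) \<in> V" by (simp add: smult_smult_assoc)
      moreover have "Suc ?j mod ?d = (i + Suc t) mod ?d" by (simp add: mod_Suc_eq)
      ultimately show ?case by simp
    qed
    have "unit_vec ?d k \<in> V" if k: "k < ?d" for k
    proof -
      have "(i + (?d - i + k)) mod ?d = k" using i k by simp
      thus ?thesis using et[of "?d - i + k"] by simp
    qed
    hence "carrier_vec ?d \<subseteq> V" by (rule csub_units[OF cs])
    thus ?thesis using VC by auto
  qed simp
qed

lemma Hcomp_irred: assumes I: "irreducible_pmod n A B" shows "Hcomp n A B = carrier_vec n"
proof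
  have "\<Union> {M. irred_sub n A B M} \<subseteq> carrier_vec n"
    by (auto simp: irred_sub_def Defs.submodule_def csubspace_def)
  thus "Hcomp n A B \<subseteq> carrier_vec n" unfolding Hcomp_def by (rule cspan_carrier)
  have "carrier_vec n \<subseteq> \<Union> {M. irred_sub n A B M}" using I by (auto simp: irreducible_pmod_def)
  thus "carrier_vec n \<subseteq> Hcomp n A B" unfolding Hcomp_def using cspan_sub by blast
qed

lemma mw_contained: assumes P: "prime_word w" and \<phi>: "cmod \<phi> = 1" and k: "k < length w"
  shows "Defs.contained (length w) (mA w \<phi>) (mB w \<phi>) (unit_vec (length w) k) (shift_ray k (per_ray w))"
  unfolding contained_iso isoray_def
proof (intro conjI allI)
  let ?d = "length w"
  show "unit_vec ?d k \<in> carrier_vec ?d" by simp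
  show "unit_vec ?d k \<noteq> 0\<^sub>v ?d" using k by simp
  fix t
  have m: "matchw w k (prefix_ray (shift_ray k (per_ray w)) t)"
    unfolding matchw_def by (simp add: shift_ray_def per_ray_def add.commute)
  have "vnorm (unit_vec ?d k) = 1" using vnorm_unit[OF k, of 1] by simp
  moreover have "(k + t) mod ?d < ?d" using k by (intro mod_less_divisor) arith
  ultimately show "vnorm (act (mA w \<phi>) (mB w \<phi>) (prefix_ray (shift_ray k (per_ray w)) t) (unit_vec ?d k)) =
    vnorm (unit_vec ?d k)"
    unfolding act_unit[OF k] using m vnorm_unit ph_norm[OF \<phi>] by simp
qed

lemma part1: assumes P: "prime_word w" and \<phi>: "cmod \<phi> = 1"
  shows "pmodule (length w) (mA w \<phi>) (mB w \<phi>) \<and> irreducible_pmod (length w) (mA w \<phi>) (mB w \<phi>) \<and>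
    Hatom_ray (length w) (mA w \<phi>) (mB w \<phi>) (per_ray w) = carrier_vec (length w)"
proof (intro conjI)
  let ?d = "length w"
  show pm: "pmodule ?d (mA w \<phi>) (mB w \<phi>)" by (rule mw_pmodule[OF prime_nonempty[OF P] \<phi>])
  show I: "irreducible_pmod ?d (mA w \<phi>) (mB w \<phi>)" by (rule mw_irred[OF P \<phi>])
  let ?G = "{\<xi> \<in> Hcomp ?d (mA w \<phi>) (mB w \<phi>). \<exists>w'. w' \<noteq> [] \<and> Defs.contained ?d (mA w \<phi>) (mB w \<phi>) \<xi> (per_ray w')}"
  have Gc: "?G \<subseteq> carrier_vec ?d" using Hcomp_irred[OF I] by auto
  have eG: "unit_vec ?d k \<in> ?G" if k: "k < ?d" for k
  proof -
    have "shift_ray k (per_ray w) = per_ray (rotate k w)"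
      using per_ray_rotate[OF prime_nonempty[OF P]] by simp
    moreover have "rotate k w \<noteq> []" using prime_nonempty[OF P] by simp
    ultimately show ?thesis using mw_contained[OF P \<phi> k] Hcomp_irred[OF I] k by (auto intro!: exI[of _ "rotate k w"])
  qed
  have HA: "Hatom ?d (mA w \<phi>) (mB w \<phi>) = carrier_vec ?d"
  proof
    show "Hatom ?d (mA w \<phi>) (mB w \<phi>) \<subseteq> carrier_vec ?d" unfolding Hatom_def by (rule cspan_carrier[OF Gc])
    show "carrier_vec ?d \<subseteq> Hatom ?d (mA w \<phi>) (mB w \<phi>)" unfolding Hatom_def
      by (rule csub_units[OF cspan_csubspace[OF Gc]]) (use eG cspan_sub in blast)
  qed
  let ?G2 = "{\<xi> \<in> Hatom ?d (mA w \<phi>) (mB w \<phi>). \<exists>k. Defs.contained ?d (mA w \<phi>) (mB w \<phi>) \<xi> (shift_ray k (per_ray w))}"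
  have G2c: "?G2 \<subseteq> carrier_vec ?d" using HA by auto
  have eG2: "unit_vec ?d k \<in> ?G2" if k: "k < ?d" for k
    using mw_contained[OF P \<phi> k] HA by auto
  show "Hatom_ray ?d (mA w \<phi>) (mB w \<phi>) (per_ray w) = carrier_vec ?d"
  proof
    show "Hatom_ray ?d (mA w \<phi>) (mB w \<phi>) (per_ray w) \<subseteq> carrier_vec ?d" unfolding Hatom_ray_def
      by (rule cspan_carrier[OF G2c])
    show "carrier_vec ?d \<subseteq> Hatom_ray ?d (mA w \<phi>) (mB w \<phi>) (per_ray w)" unfolding Hatom_ray_def
      by (rule csub_units[OF cspan_csubspace[OF G2c]]) (use eG2 cspan_sub in blast)
  qed
qed


lemma tr_word: assumes w: "w \<noteq> []"
  shows "tr (matw (length w) (mA w \<phi>) (mB w \<phi>) u) =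
    (\<Sum>k<length w. if matchw w k u \<and> (k + length u) mod length w = k then ph w \<phi> k u else 0)"
proof -
  let ?d = "length w"
  have M: "matw ?d (mA w \<phi>) (mB w \<phi>) u \<in> carrier_mat ?d ?d" by (rule matw_carrier) auto
  show ?thesis unfolding tr_units[OF M]
  proof (rule sum.cong[OF refl])
    fix k assume "k \<in> {..<?d}"
    hence k: "k < ?d" by simp
    have "matw ?d (mA w \<phi>) (mB w \<phi>) u *\<^sub>v unit_vec ?d k = act (mA w \<phi>) (mB w \<phi>) u (unit_vec ?d k)"
      by (rule act_matw[symmetric]) auto
    also have "\<dots> = (if matchw w k u then ph w \<phi> k u \<cdot>\<^sub>v unit_vec ?d ((k + length u) mod ?d) else 0\<^sub>v ?d)"
      by (rule act_unit[OF k])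
    finally show "(matw ?d (mA w \<phi>) (mB w \<phi>) u *\<^sub>v unit_vec ?d k) $ k =
      (if matchw w k u \<and> (k + length u) mod ?d = k then ph w \<phi> k u else 0)"
      using k w by auto
  qed
qed

lemma tr_self: assumes P: "prime_word w"
  shows "tr (matw (length w) (mA w \<phi>) (mB w \<phi>) w) = \<phi>"
proof -
  let ?d = "length w"
  have w: "w \<noteq> []" by (rule prime_nonempty[OF P])
  have d0: "?d > 0" using w by simp
  have m: "matchw w k w \<longleftrightarrow> k = 0" if k: "k < ?d" for k
    using match_rotate[OF P d0 k] by simp
  have "tr (matw ?d (mA w \<phi>) (mB w \<phi>) w) = (\<Sum>k<?d. if k = 0 then ph w \<phi> 0 w else 0)"
    unfolding tr_word[OF w] by (intro sum.cong) (auto simp: m)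
  also have "\<dots> = ph w \<phi> 0 w" using d0 by simp
  also have "\<dots> = (\<Prod>t<?d. if t = ?d - 1 then \<phi> else 1)" unfolding ph_def dd_def
    by (intro prod.cong) auto
  also have "\<dots> = \<phi>" using d0 by simp
  finally show ?thesis .
qed

lemma adj_one: "adj (1\<^sub>m n) = (1\<^sub>m n :: complex mat)"
  by (intro eq_matI) (auto simp: adj_def)

lemma part3: assumes R: "rep_set W" and w: "w \<in> W" and w': "w' \<in> W"
  and \<phi>: "cmod \<phi> = 1" and \<phi>': "cmod \<phi>' = 1"
  shows "unit_equiv (length w) (mA w \<phi>) (mB w \<phi>) (length w') (mA w' \<phi>') (mB w' \<phi>')
    \<longleftrightarrow> (w, \<phi>) = (w', \<phi>')"
proof
  assume "(w, \<phi>) = (w', \<phi>')"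
  hence e: "w' = w" "\<phi>' = \<phi>" by auto
  show "unit_equiv (length w) (mA w \<phi>) (mB w \<phi>) (length w') (mA w' \<phi>') (mB w' \<phi>')"
    unfolding unit_equiv_def e
    by (intro bexI[of _ "1\<^sub>m (length w)"]) (auto simp: adj_one)
next
  let ?d = "length w" and ?d' = "length w'"
  have P: "prime_word w" "prime_word w'" using R w w' by (auto simp: rep_set_def)
  assume "unit_equiv ?d (mA w \<phi>) (mB w \<phi>) ?d' (mA w' \<phi>') (mB w' \<phi>')"
  then obtain U where U: "U \<in> carrier_mat ?d' ?d" and u1: "adj U * U = 1\<^sub>m ?d" and u2: "U * adj U = 1\<^sub>m ?d'"
    and iA: "U * mA w \<phi> = mA w' \<phi>' * U" and iB: "U * mB w \<phi> = mB w' \<phi>' * U"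
    unfolding unit_equiv_def by blast
  have aU: "adj U \<in> carrier_mat ?d ?d'" using U by simp
  have "of_nat ?d = tr (adj U * U)" using u1 by (simp add: tr_one)
  also have "\<dots> = tr (U * adj U)" by (rule tr_swap[OF aU U])
  also have "\<dots> = of_nat ?d'" using u2 by (simp add: tr_one)
  finally have dd': "?d = ?d'" by simp
  let ?M = "matw ?d (mA w \<phi>) (mB w \<phi>) w" and ?M' = "matw ?d' (mA w' \<phi>') (mB w' \<phi>') w"
  have M: "?M \<in> carrier_mat ?d ?d" and M': "?M' \<in> carrier_mat ?d' ?d'" by (rule matw_carrier; simp)+
  have int: "U * ?M = ?M' * U" by (rule matw_intertwine[OF _ _ _ _ U iA iB]) auto
  have "?M' = ?M' * (U * adj U)" using u2 M' by simp
  also have "\<dots> = (?M' * U) * adj U" using assoc_mult_mat[OF M' U aU] by simp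
  also have "\<dots> = U * (?M * adj U)" using int assoc_mult_mat[OF U M aU] by simp
  finally have "tr ?M' = tr (U * (?M * adj U))" by simp
  also have "\<dots> = tr ((?M * adj U) * U)" by (rule tr_swap[OF U]) (use M aU in simp)
  also have "\<dots> = tr (?M * (adj U * U))" using assoc_mult_mat[OF M aU U] by simp
  also have "\<dots> = tr ?M" using u1 M by simp
  also have "\<dots> = \<phi>" by (rule tr_self[OF P(1)])
  finally have trM': "tr ?M' = \<phi>" .
  have w'0: "w' \<noteq> []" by (rule prime_nonempty[OF P(2)])
  have "\<exists>k<?d'. matchw w' k w"
  proof (rule ccontr)
    assume "\<not> ?thesis"
    hence "tr ?M' = 0" unfolding tr_word[OF w'0] by (intro sum.neutral) auto
    thus False using trM' \<phi> by auto
  qed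
  then obtain k where k: "k < ?d'" and mk: "matchw w' k w" by auto
  have "w = rotate k w'" using rotate_eq_nth[of w w' k] mk dd' w'0 by (simp add: matchw_def)
  moreover have "w = rotate 0 w" by simp
  ultimately have ww: "w = w'" using R w w' P(1) unfolding rep_set_def by blast
  have "tr ?M' = \<phi>'" unfolding ww[symmetric] using tr_self[OF P(1)] ww by simp
  thus "(w, \<phi>) = (w', \<phi>')" using trM' ww by simp
qed


lemma smult_0v[simp]: "c \<cdot>\<^sub>v 0\<^sub>v n = (0\<^sub>v n :: complex vec)"
  by (intro eq_vecI) auto

lemma vnorm_smult: "vnorm (c \<cdot>\<^sub>v x) = cmod c * vnorm x"
  unfolding vnorm_def
  by (simp add: norm_mult power_mult_distrib sum_distrib_left[symmetric] real_sqrt_mult)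

lemma prefix_per_rep: "r \<noteq> [] \<Longrightarrow> prefix_ray (per_ray r) (k * length r) = concat (replicate k r)"
  by (intro nth_equalityI) (auto simp: per_ray_def nth_concat_rep)

lemma prefix_per_le: "j \<le> length r \<Longrightarrow> prefix_ray (per_ray r) j = take j r"
  by (intro nth_equalityI) (auto simp: per_ray_def)

lemma shift_per_mod: assumes "c mod length r = 0" shows "shift_ray c (per_ray r) = per_ray r"
proof
  fix i
  have "(i + c) mod length r = i mod length r" using assms by (metis mod_add_right_eq add_0_right)
  thus "shift_ray c (per_ray r) i = per_ray r i" by (simp add: shift_ray_def per_ray_def)
qed

lemma pow_act: assumes A: "A \<in> carrier_mat n n" and B: "B \<in> carrier_mat n n"
  shows "x \<in> carrier_vec n \<Longrightarrow> matw n A B r ^\<^sub>m k *\<^sub>v x = act A B (concat (replicate k r)) x"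
proof (induct k arbitrary: x)
  case 0
  have "dim_row (matw n A B r) = n" using matw_carrier[OF A B] by auto
  thus ?case using 0 by simp
next
  case (Suc k)
  let ?T = "matw n A B r"
  have T: "?T \<in> carrier_mat n n" by (rule matw_carrier[OF A B])
  have Tk: "?T ^\<^sub>m k \<in> carrier_mat n n" using T by (rule pow_carrier_mat)
  have "?T ^\<^sub>m Suc k *\<^sub>v x = ?T ^\<^sub>m k *\<^sub>v (?T *\<^sub>v x)"
    using assoc_mult_mat_vec[OF Tk T Suc(2)] by simp
  also have "\<dots> = act A B (concat (replicate k r)) (act A B r x)"
    using Suc act_matw[OF A B Suc(2)] T by simp
  also have "\<dots> = act A B (concat (replicate (Suc k) r)) x" by (simp add: act_append)
  finally show ?case .
qed

lemma mat_eq_units: fixes M N :: "complex mat"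
  assumes M: "M \<in> carrier_mat r c" and N: "N \<in> carrier_mat r c"
  and E: "\<And>k. k < c \<Longrightarrow> M *\<^sub>v unit_vec c k = N *\<^sub>v unit_vec c k"
  shows "M = N"
proof (rule eq_matI)
  fix i j assume "i < dim_row N" "j < dim_col N"
  hence i: "i < r" and j: "j < c" using N by auto
  show "M $$ (i,j) = N $$ (i,j)"
    using mat_vec_unit[OF M j i] mat_vec_unit[OF N j i] E[OF j] by simp
qed (use M N in auto)

locale P2 =
  fixes n :: nat and A B :: "complex mat" and r :: "bool list" and lam :: complex and eta :: "complex vec"
  assumes P: "pmodule n A B" and I: "irreducible_pmod n A B" and pr: "prime_word r"
  and ec: "eta \<in> carrier_vec n" and e0: "eta \<noteq> 0\<^sub>v n" and iso: "isoray A B eta (per_ray r)"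
  and ev: "act A B r eta = lam \<cdot>\<^sub>v eta" and lam: "cmod lam = 1"
begin

abbreviation "m \<equiv> length r"
abbreviation "p \<equiv> per_ray r"

definition et :: "nat \<Rightarrow> complex vec" where "et j = act A B (prefix_ray p j) eta"
definition nu :: real where "nu = vnorm eta"
definition uu :: "nat \<Rightarrow> complex vec" where "uu j = complex_of_real (1 / nu) \<cdot>\<^sub>v et j"
definition UU :: "complex mat" where "UU = mat m n (\<lambda>(j,i). cnj (uu j $ i))"

lemma m0: "m > 0" using prime_nonempty[OF pr] by simp
lemma Ac: "A \<in> carrier_mat n n" using P by (simp add: pmodule_def)
lemma Bc: "B \<in> carrier_mat n n" using P by (simp add: pmodule_def)
lemma opc: "op A B b \<in> carrier_mat n n" by (rule pmodule_op[OF P])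
lemma et_carrier: "et j \<in> carrier_vec n" unfolding et_def by (rule act_carrier[OF P ec])
lemma nu_pos: "nu > 0"
proof -
  have "nu \<noteq> 0" using vnorm_zero_iff[OF ec] e0 by (simp add: nu_def)
  thus ?thesis using vnorm_ge0[of eta] by (simp add: nu_def)
qed
lemma et_norm: "vnorm (et j) = nu" using iso unfolding isoray_def et_def nu_def by simp
lemma et_iso: "isoray A B (et j) (shift_ray j p)" unfolding et_def by (rule iso_shift[OF iso])
lemma et_step: "op A B (p j) *\<^sub>v et j = et (Suc j)"
  unfolding et_def prefix_Suc act_snoc ..
lemma et_kill: "op A B (\<not> p j) *\<^sub>v et j = 0\<^sub>v n"
  using iso_step(1)[OF P et_carrier et_iso, of j] by (simp add: shift_ray_def)
lemma et_0: "et 0 = eta" by (simp add: et_def prefix_ray_def)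
lemma et_m: "et m = lam \<cdot>\<^sub>v eta" unfolding et_def prefix_per_le[OF le_refl] using ev by simp
lemma p_lt: "j < m \<Longrightarrow> p j = r ! j" by (simp add: per_ray_def)

lemma op_et: assumes k: "k < m"
  shows "op A B b *\<^sub>v et k = (if r ! k = b then dd m lam k \<cdot>\<^sub>v et (Suc k mod m) else 0\<^sub>v n)"
proof (cases "r ! k = b")
  case True
  hence "op A B b *\<^sub>v et k = et (Suc k)" using et_step[of k] p_lt[OF k] by simp
  also have "\<dots> = dd m lam k \<cdot>\<^sub>v et (Suc k mod m)"
  proof (cases "Suc k = m")
    case True
    hence "k = m - 1" by simp
    thus ?thesis using True et_m et_0 by (simp add: dd_def)
  next
    case False
    hence sk: "Suc k < m" using k by simp
    hence "k \<noteq> m - 1" by simp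
    thus ?thesis using sk by (simp add: dd_def)
  qed
  finally show ?thesis using True by simp
next
  case False
  hence "b = (\<not> p k)" using p_lt[OF k] by auto
  thus ?thesis using et_kill[of k] False by simp
qed

lemma ortho_et: assumes i: "i < m" and j: "j < m" and ij: "i \<noteq> j"
  shows "ip (et i) (et j) = 0"
proof -
  have r0: "r \<noteq> []" using prime_nonempty[OF pr] .
  have ne: "shift_ray i p \<noteq> shift_ray j p"
  proof
    assume "shift_ray i p = shift_ray j p"
    hence e: "per_ray (rotate i r) = per_ray (rotate j r)" using per_ray_rotate[OF r0] by simp
    have "rotate i r = rotate j r"
    proof (rule nth_equalityI)
      fix t assume "t < length (rotate i r)"
      hence t: "t < m" by simp
      have "rotate i r ! t = per_ray (rotate i r) t" using t by (simp add: per_ray_def)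
      also have "\<dots> = per_ray (rotate j r) t" using e by simp
      also have "\<dots> = rotate j r ! t" using t by (simp add: per_ray_def)
      finally show "rotate i r ! t = rotate j r ! t" .
    qed simp
    thus False using rotate_inj[OF pr i j] ij by simp
  qed
  then obtain t0 where "shift_ray i p t0 \<noteq> shift_ray j p t0" by auto
  hence ex: "\<exists>t. shift_ray i p t \<noteq> shift_ray j p t" by auto
  define t where "t = (LEAST t. shift_ray i p t \<noteq> shift_ray j p t)"
  have t1: "shift_ray i p t \<noteq> shift_ray j p t" unfolding t_def by (rule LeastI_ex[OF ex])
  have t2: "\<forall>s<t. shift_ray i p s = shift_ray j p s" unfolding t_def using not_less_Least by blast
  show ?thesis by (rule ortho[OF P et_carrier et_carrier et_iso et_iso t2 t1])
qed

lemma uu_carrier: "uu j \<in> carrier_vec n" unfolding uu_def using et_carrier by simp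

lemma et_uu: "et j = complex_of_real nu \<cdot>\<^sub>v uu j"
proof -
  have "complex_of_real nu \<cdot>\<^sub>v uu j = (complex_of_real nu * complex_of_real (1 / nu)) \<cdot>\<^sub>v et j"
    unfolding uu_def by (rule smult_smult_assoc)
  also have "complex_of_real nu * complex_of_real (1 / nu) = 1" using nu_pos
    by (simp flip: of_real_mult)
  finally show ?thesis by simp
qed

lemma ip_uu: assumes i: "i < m" and j: "j < m"
  shows "ip (uu i) (uu j) = (if i = j then 1 else 0)"
proof -
  have d: "dim_vec (et j) = dim_vec (et i)" using et_carrier[of i] et_carrier[of j] by simp
  have "ip (uu i) (uu j) = complex_of_real (1 / nu) * cnj (complex_of_real (1 / nu)) * ip (et i) (et j)"
    unfolding uu_def ip_smult1 ip_smult2[OF d] by (simp only: mult.assoc)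
  also have "\<dots> = complex_of_real (1 / nu^2) * ip (et i) (et j)"
    by (simp add: power2_eq_square)
  finally have e: "ip (uu i) (uu j) = complex_of_real (1 / nu^2) * ip (et i) (et j)" .
  show ?thesis
  proof (cases "i = j")
    case True
    have "ip (et i) (et i) = complex_of_real (nu^2)" using ip_self et_norm by simp
    thus ?thesis using e True nu_pos by (simp flip: of_real_mult)
  next
    case False thus ?thesis using e ortho_et[OF i j] by simp
  qed
qed

lemma op_uu: assumes k: "k < m"
  shows "op A B b *\<^sub>v uu k = (if r ! k = b then dd m lam k \<cdot>\<^sub>v uu (Suc k mod m) else 0\<^sub>v n)"
proof -
  have "op A B b *\<^sub>v uu k = complex_of_real (1 / nu) \<cdot>\<^sub>v (op A B b *\<^sub>v et k)"
    unfolding uu_def by (rule mult_mat_vec[OF opc et_carrier])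
  also have "\<dots> = (if r ! k = b then dd m lam k \<cdot>\<^sub>v uu (Suc k mod m) else 0\<^sub>v n)"
  proof (cases "r ! k = b")
    case True
    have "complex_of_real (1 / nu) \<cdot>\<^sub>v (dd m lam k \<cdot>\<^sub>v et (Suc k mod m)) =
        dd m lam k \<cdot>\<^sub>v (complex_of_real (1 / nu) \<cdot>\<^sub>v et (Suc k mod m))"
      by (simp only: smult_smult_assoc mult.commute)
    thus ?thesis unfolding op_et[OF k] uu_def using True by simp
  next
    case False
    thus ?thesis unfolding op_et[OF k] by simp
  qed
  finally show ?thesis .
qed

definition V where "V = cspan n (et ` {..<m})"

lemma V_gen_sub: "et ` {..<m} \<subseteq> carrier_vec n" using et_carrier by auto
lemma V_cs: "csubspace n V" unfolding V_def by (rule cspan_csubspace[OF V_gen_sub])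
lemma et_V: assumes k: "k < m" shows "et k \<in> V"
proof -
  have "et k \<in> et ` {..<m}" using k by simp
  thus ?thesis unfolding V_def by (rule subsetD[OF cspan_sub])
qed

lemma V_closed: "0\<^sub>v n \<in> V" "\<And>x y. x \<in> V \<Longrightarrow> y \<in> V \<Longrightarrow> x + y \<in> V"
  "\<And>c x. x \<in> V \<Longrightarrow> c \<cdot>\<^sub>v x \<in> V" "V \<subseteq> carrier_vec n"
proof -
  have c: "V \<subseteq> carrier_vec n \<and> 0\<^sub>v n \<in> V \<and> (\<forall>x\<in>V. \<forall>y\<in>V. x + y \<in> V) \<and> (\<forall>c. \<forall>x\<in>V. c \<cdot>\<^sub>v x \<in> V)"
    using V_cs unfolding csubspace_def .
  show "0\<^sub>v n \<in> V" using c by simp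
  show "\<And>x y. x \<in> V \<Longrightarrow> y \<in> V \<Longrightarrow> x + y \<in> V" using c by simp
  show "\<And>c x. x \<in> V \<Longrightarrow> c \<cdot>\<^sub>v x \<in> V" using c by simp
  show "V \<subseteq> carrier_vec n" using c by simp
qed

lemma V_op: "x \<in> V \<Longrightarrow> op A B b *\<^sub>v x \<in> V"
proof -
  define Pb where "Pb = {x \<in> carrier_vec n. op A B b *\<^sub>v x \<in> V}"
  have cs: "csubspace n Pb" unfolding csubspace_def
  proof (intro conjI ballI allI)
    show "Pb \<subseteq> carrier_vec n" by (auto simp: Pb_def)
    have "op A B b *\<^sub>v 0\<^sub>v n = 0\<^sub>v n" by (rule mat_vec_zero[OF opc])
    thus "0\<^sub>v n \<in> Pb" using V_closed(1) by (simp add: Pb_def)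
    fix x y assume x: "x \<in> Pb" and y: "y \<in> Pb"
    have xc: "x \<in> carrier_vec n" "y \<in> carrier_vec n" "op A B b *\<^sub>v x \<in> V" "op A B b *\<^sub>v y \<in> V"
      using x y by (auto simp: Pb_def)
    have "op A B b *\<^sub>v (x + y) = op A B b *\<^sub>v x + op A B b *\<^sub>v y"
      by (rule mult_add_distrib_mat_vec[OF opc xc(1) xc(2)])
    hence "op A B b *\<^sub>v (x + y) \<in> V" using V_closed(2)[OF xc(3) xc(4)] by simp
    thus "x + y \<in> Pb" using xc by (simp add: Pb_def)
  next
    fix c x assume x: "x \<in> Pb"
    have xc: "x \<in> carrier_vec n" "op A B b *\<^sub>v x \<in> V" using x by (auto simp: Pb_def)
    have "op A B b *\<^sub>v (c \<cdot>\<^sub>v x) = c \<cdot>\<^sub>v (op A B b *\<^sub>v x)"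
      by (rule mult_mat_vec[OF opc xc(1)])
    hence "op A B b *\<^sub>v (c \<cdot>\<^sub>v x) \<in> V" using V_closed(3)[OF xc(2)] by simp
    thus "c \<cdot>\<^sub>v x \<in> Pb" using xc by (simp add: Pb_def)
  qed
  have "et ` {..<m} \<subseteq> Pb"
  proof
    fix y assume "y \<in> et ` {..<m}"
    then obtain k where k: "k < m" and y: "y = et k" by auto
    have "Suc k mod m < m" using m0 by simp
    hence "et (Suc k mod m) \<in> V" by (rule et_V)
    hence "op A B b *\<^sub>v et k \<in> V" unfolding op_et[OF k] using V_closed(1,3) by simp
    thus "y \<in> Pb" using y et_carrier by (simp add: Pb_def)
  qed
  hence "V \<subseteq> Pb" unfolding V_def by (rule cspan_least[OF cs])
  thus "x \<in> V \<Longrightarrow> op A B b *\<^sub>v x \<in> V" by (auto simp: Pb_def)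
qed

lemma V_carrier: "V = carrier_vec n"
proof -
  have S: "Defs.submodule n A B V" unfolding Defs.submodule_def
    using V_cs V_op[of _ False] V_op[of _ True] by (simp add: op_def)
  have VC: "V \<subseteq> carrier_vec n" by (rule V_closed(4))
  have "eta \<in> V" using et_V[OF m0] et_0 by simp
  hence ne: "V \<noteq> {0\<^sub>v n}" using e0 by auto
  have all: "\<forall>V. Defs.submodule n A B V \<and> V \<subseteq> carrier_vec n \<longrightarrow> V = {0\<^sub>v n} \<or> V = carrier_vec n"
    using I unfolding irreducible_pmod_def irred_sub_def by (elim conjE)
  from all S VC have "V = {0\<^sub>v n} \<or> V = carrier_vec n" by simp
  thus ?thesis using ne by simp
qed

lemma UU_carrier: "UU \<in> carrier_mat m n" by (simp add: UU_def)

lemma adjUU: "adj UU = mat n m (\<lambda>(i,j). uu j $ i)"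
  by (intro eq_matI) (auto simp: adj_def UU_def)

lemma adjUU_carrier: "adj UU \<in> carrier_mat n m" using UU_carrier by simp

lemma UU_vec: assumes y: "y \<in> carrier_vec n" and j: "j < m"
  shows "(UU *\<^sub>v y) $ j = ip y (uu j)"
proof -
  have "(UU *\<^sub>v y) $ j = (\<Sum>i<n. UU $$ (j,i) * y $ i)" by (rule mat_vec_index[OF UU_carrier y j])
  also have "\<dots> = ip y (uu j)" unfolding ip_def using y j
    by (auto simp: UU_def mult.commute intro!: sum.cong)
  finally show ?thesis .
qed

lemma adjUU_unit: assumes k: "k < m" shows "adj UU *\<^sub>v unit_vec m k = uu k"
proof (rule eq_vecI)
  fix i assume "i < dim_vec (uu k)"
  hence i: "i < n" using uu_carrier[of k] by simp
  show "(adj UU *\<^sub>v unit_vec m k) $ i = uu k $ i"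
    using mat_vec_unit[OF adjUU_carrier k i] i k by (simp add: adjUU)
qed (use uu_carrier[of k] UU_carrier in simp)

lemma UU_uu: assumes k: "k < m" shows "UU *\<^sub>v uu k = unit_vec m k"
proof (rule eq_vecI)
  fix j assume "j < dim_vec (unit_vec m k :: complex vec)"
  hence j: "j < m" by simp
  show "(UU *\<^sub>v uu k) $ j = unit_vec m k $ j"
    using UU_vec[OF uu_carrier j] ip_uu[OF k j] j k by auto
qed (use UU_carrier in simp)

lemma UU_adj: "UU * adj UU = 1\<^sub>m m"
proof (rule mat_eq_units)
  show "UU * adj UU \<in> carrier_mat m m" using UU_carrier adjUU_carrier by (rule mult_carrier_mat)
  show "1\<^sub>m m \<in> carrier_mat m m" by simp
  fix k assume k: "k < m"
  have "(UU * adj UU) *\<^sub>v unit_vec m k = UU *\<^sub>v (adj UU *\<^sub>v unit_vec m k)"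
    by (rule assoc_mult_mat_vec[OF UU_carrier adjUU_carrier]) simp
  also have "\<dots> = unit_vec m k" using adjUU_unit[OF k] UU_uu[OF k] by simp
  finally show "(UU * adj UU) *\<^sub>v unit_vec m k = 1\<^sub>m m *\<^sub>v unit_vec m k" by simp
qed

lemma adj_UU: "adj UU * UU = 1\<^sub>m n"
proof -
  define F where "F = {x \<in> carrier_vec n. adj UU *\<^sub>v (UU *\<^sub>v x) = x}"
  have cs: "csubspace n F" unfolding csubspace_def
  proof (intro conjI ballI allI)
    show "F \<subseteq> carrier_vec n" by (auto simp: F_def)
    show "0\<^sub>v n \<in> F" using UU_carrier adjUU_carrier by (simp add: F_def)
    fix x y assume x: "x \<in> F" and y: "y \<in> F"
    have xc: "x \<in> carrier_vec n" "y \<in> carrier_vec n" using x y by (auto simp: F_def)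
    have "adj UU *\<^sub>v (UU *\<^sub>v (x + y)) = adj UU *\<^sub>v (UU *\<^sub>v x) + adj UU *\<^sub>v (UU *\<^sub>v y)"
      using xc UU_carrier adjUU_carrier
      by (simp add: mult_add_distrib_mat_vec[OF UU_carrier] mult_add_distrib_mat_vec[OF adjUU_carrier])
    thus "x + y \<in> F" using x y xc by (simp add: F_def)
  next
    fix c x assume x: "x \<in> F"
    have xc: "x \<in> carrier_vec n" using x by (auto simp: F_def)
    have "adj UU *\<^sub>v (UU *\<^sub>v (c \<cdot>\<^sub>v x)) = c \<cdot>\<^sub>v (adj UU *\<^sub>v (UU *\<^sub>v x))"
      using xc by (simp add: mult_mat_vec[OF UU_carrier] mult_mat_vec[OF adjUU_carrier mult_mat_vec_carrier[OF UU_carrier xc]])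
    thus "c \<cdot>\<^sub>v x \<in> F" using x xc by (simp add: F_def)
  qed
  have "et ` {..<m} \<subseteq> F"
  proof
    fix y assume "y \<in> et ` {..<m}"
    then obtain k where k: "k < m" and y: "y = et k" by auto
    have "adj UU *\<^sub>v (UU *\<^sub>v et k) = et k"
      unfolding et_uu[of k] mult_mat_vec[OF UU_carrier uu_carrier] mult_mat_vec[OF adjUU_carrier]
      using UU_uu[OF k] adjUU_unit[OF k]
      by (simp add: mult_mat_vec[OF adjUU_carrier unit_vec_carrier])
    thus "y \<in> F" using y et_carrier by (simp add: F_def)
  qed
  hence "V \<subseteq> F" unfolding V_def by (rule cspan_least[OF cs])
  hence FF: "carrier_vec n \<subseteq> F" using V_carrier by simp
  show ?thesis
  proof (rule mat_eq_units)
    show "adj UU * UU \<in> carrier_mat n n" using adjUU_carrier UU_carrier by (rule mult_carrier_mat)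
    show "1\<^sub>m n \<in> carrier_mat n n" by simp
    fix k assume k: "k < n"
    have "unit_vec n k \<in> F" using FF by auto
    hence "adj UU *\<^sub>v (UU *\<^sub>v unit_vec n k) = unit_vec n k" by (simp add: F_def)
    thus "(adj UU * UU) *\<^sub>v unit_vec n k = 1\<^sub>m n *\<^sub>v unit_vec n k"
      using assoc_mult_mat_vec[OF adjUU_carrier UU_carrier unit_vec_carrier] by simp
  qed
qed

lemma mn: "m = n"
proof -
  have "of_nat n = tr (adj UU * UU)" using adj_UU by (simp add: tr_one)
  also have "\<dots> = tr (UU * adj UU)" by (rule tr_swap[OF adjUU_carrier UU_carrier])
  also have "\<dots> = of_nat m" using UU_adj by (simp add: tr_one)
  finally show ?thesis by simp
qed

lemma inter: "UU * op A B b = op (mA r lam) (mB r lam) b * UU"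
proof -
  let ?X = "op A B b" and ?X' = "op (mA r lam) (mB r lam) b"
  have X': "?X' \<in> carrier_mat m m" by (rule op_carrier)
  have Xc: "?X \<in> carrier_mat n n" by (rule opc)
  have UXc: "UU * ?X \<in> carrier_mat m n" using UU_carrier Xc by (rule mult_carrier_mat)
  have e: "UU * ?X * adj UU = ?X'"
  proof (rule mat_eq_units)
    show "UU * ?X * adj UU \<in> carrier_mat m m" using UXc adjUU_carrier by (rule mult_carrier_mat)
    show "?X' \<in> carrier_mat m m" by (rule X')
    fix k assume k: "k < m"
    have "(UU * ?X * adj UU) *\<^sub>v unit_vec m k = UU *\<^sub>v (?X *\<^sub>v uu k)"
      using assoc_mult_mat_vec[OF UXc adjUU_carrier unit_vec_carrier]
        assoc_mult_mat_vec[OF UU_carrier Xc uu_carrier] adjUU_unit[OF k] by simp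
    also have "\<dots> = (if r ! k = b then dd m lam k \<cdot>\<^sub>v unit_vec m (Suc k mod m) else 0\<^sub>v m)"
      unfolding op_uu[OF k] using m0
      by (auto simp: mult_mat_vec[OF UU_carrier uu_carrier] UU_uu mat_vec_zero[OF UU_carrier])
    also have "\<dots> = ?X' *\<^sub>v unit_vec m k" by (rule op_unit[OF k, symmetric])
    finally show "(UU * ?X * adj UU) *\<^sub>v unit_vec m k = ?X' *\<^sub>v unit_vec m k" .
  qed
  have "UU * ?X = UU * ?X * (adj UU * UU)" using adj_UU by (simp add: right_mult_one_mat[OF UXc])
  also have "\<dots> = (UU * ?X * adj UU) * UU" using assoc_mult_mat[OF UXc adjUU_carrier UU_carrier] by simp
  also have "\<dots> = ?X' * UU" using e by simp
  finally show ?thesis .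
qed

lemma result: "m = n \<and> unit_equiv n A B n (mA r lam) (mB r lam)"
proof
  show "m = n" by (rule mn)
  show "unit_equiv n A B n (mA r lam) (mB r lam)" unfolding unit_equiv_def
  proof (intro bexI conjI)
    show "UU \<in> carrier_mat n n" using UU_carrier mn by simp
    show "adj UU * UU = 1\<^sub>m n" by (rule adj_UU)
    show "UU * adj UU = 1\<^sub>m n" using UU_adj mn by simp
    show "UU * A = mA r lam * UU" using inter[of False] by (simp add: op_def)
    show "UU * B = mB r lam * UU" using inter[of True] by (simp add: op_def)
  qed
qed

end


lemma part2: assumes R: "rep_set W" and P: "pmodule n A B" and At: "atomic n A B"
  and I: "irreducible_pmod n A B"
  shows "\<exists>v \<in> W. length v = n \<and> (\<exists>lam. cmod lam = 1 \<and>
          unit_equiv n A B n (A_w v * D_phi n lam) (B_w v * D_phi n lam))"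
proof -
  have Ac: "A \<in> carrier_mat n n" and Bc: "B \<in> carrier_mat n n" using P by (auto simp: pmodule_def)
  have Hc: "Hcomp n A B = carrier_vec n" by (rule Hcomp_irred[OF I])
  define G where "G = {\<xi> \<in> Hcomp n A B. \<exists>w. w \<noteq> [] \<and> Defs.contained n A B \<xi> (per_ray w)}"
  have HA: "cspan n G = carrier_vec n" using At Hc unfolding atomic_def Hatom_def G_def by simp
  have cne: "carrier_vec n \<noteq> {0\<^sub>v n :: complex vec}" using I by (simp add: irreducible_pmod_def irred_sub_def)
  have "G \<noteq> {}"
  proof
    assume "G = {}"
    hence "cspan n G = {0\<^sub>v n}" by (simp add: cspan_empty)
    thus False using HA cne by simp
  qed
  then obtain \<xi> w0 where xc: "\<xi> \<in> carrier_vec n" and x0: "\<xi> \<noteq> 0\<^sub>v n" and w0: "w0 \<noteq> []"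
    and xi: "isoray A B \<xi> (per_ray w0)"
    unfolding G_def contained_iso by blast
  obtain u k where pu: "prime_word u" and k: "k \<ge> 1" and wu: "w0 = concat (replicate k u)"
    using primitive_root[OF w0] by blast
  have "per_ray w0 = per_ray u" unfolding wu by (rule per_ray_rep[OF k prime_nonempty[OF pu]])
  from R pu obtain r j where rW: "r \<in> W" and ur: "u = rotate j r"
    unfolding rep_set_def by blast
  have pr: "prime_word r" using R rW by (simp add: rep_set_def)
  have r0: "r \<noteq> []" by (rule prime_nonempty[OF pr])
  let ?p = "per_ray r" and ?m = "length r"
  have xi2: "isoray A B \<xi> (shift_ray j ?p)"
    using xi \<open>per_ray w0 = per_ray u\<close> ur per_ray_rotate[OF r0] by simp
  define a where "a = ?m - j mod ?m"
  define \<xi>1 where "\<xi>1 = act A B (prefix_ray (shift_ray j ?p) a) \<xi>"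
  have "(a + j) mod ?m = 0"
  proof -
    have "(a + j) mod ?m = (a + j mod ?m) mod ?m" by (simp add: mod_add_right_eq)
    also have "a + j mod ?m = ?m" using r0 by (simp add: a_def)
    finally show ?thesis by simp
  qed
  hence i1: "isoray A B \<xi>1 ?p"
    using iso_shift[OF xi2, of a] shift_per_mod[of "a + j" r] by (simp add: \<xi>1_def)
  have x1c: "\<xi>1 \<in> carrier_vec n" unfolding \<xi>1_def by (rule act_carrier[OF P xc])
  have "vnorm \<xi>1 = vnorm \<xi>" using xi2 unfolding isoray_def \<xi>1_def by simp
  moreover have "vnorm \<xi> \<noteq> 0" using vnorm_zero_iff[OF xc] x0 by simp
  ultimately have x10: "\<xi>1 \<noteq> 0\<^sub>v n" using vnorm_zero_iff[OF x1c] by simp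
  let ?T = "matw n A B r"
  have T: "?T \<in> carrier_mat n n" by (rule matw_carrier[OF Ac Bc])
  have Tk: "?T ^\<^sub>m k' *\<^sub>v v = act A B (prefix_ray ?p (k' * ?m)) v" if "v \<in> carrier_vec n" for k' v
    using pow_act[OF Ac Bc that] prefix_per_rep[OF r0] by simp
  have "vnorm (?T ^\<^sub>m k' *\<^sub>v \<xi>1) = vnorm \<xi>1" for k'
    using Tk[OF x1c] i1 unfolding isoray_def by simp
  from exists_ev[OF T x1c x10 this] obtain lam \<eta> where ev: "eigenvector ?T \<eta> lam"
    and lam1: "cmod lam \<ge> 1" by blast
  have ec: "\<eta> \<in> carrier_vec n" and e0: "\<eta> \<noteq> 0\<^sub>v n" and Te: "?T *\<^sub>v \<eta> = lam \<cdot>\<^sub>v \<eta>"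
    using ev T unfolding eigenvector_def by auto
  have ar: "act A B r \<eta> = lam \<cdot>\<^sub>v \<eta>" using act_matw[OF Ac Bc ec] Te by simp
  have ve: "vnorm \<eta> > 0"
  proof -
    have "vnorm \<eta> \<noteq> 0" using vnorm_zero_iff[OF ec] e0 by simp
    thus ?thesis using vnorm_ge0[of \<eta>] by simp
  qed
  have "cmod lam * vnorm \<eta> \<le> vnorm \<eta>" using act_contr[OF P ec, of r] ar vnorm_smult by simp
  hence "cmod lam \<le> 1" using ve by (simp add: mult_le_cancel_right1)
  hence lam: "cmod lam = 1" using lam1 by simp
  have ie: "isoray A B \<eta> ?p"
  proof (rule iso_from_large[OF P ec])
    fix k'
    have "?m \<ge> 1" using r0 by (cases r) auto
    hence "k' \<le> k' * ?m" by simp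
    moreover have "vnorm (act A B (prefix_ray ?p (k' * ?m)) \<eta>) \<ge> vnorm \<eta>"
    proof -
      have "act A B (prefix_ray ?p (k' * ?m)) \<eta> = lam ^ k' \<cdot>\<^sub>v \<eta>"
        using Tk[OF ec, of k'] eigenvector_pow[OF T ev] by simp
      thus ?thesis using lam by (simp add: vnorm_smult norm_power)
    qed
    ultimately show "\<exists>K\<ge>k'. vnorm \<eta> \<le> vnorm (act A B (prefix_ray ?p K) \<eta>)" by blast
  qed
  interpret P2 n A B r lam \<eta>
    by (unfold_locales) (use P I pr ec e0 ie ar lam in auto)
  from result have "?m = n" "unit_equiv n A B n (mA r lam) (mB r lam)" by auto
  thus ?thesis using rW lam by (auto simp: mA_def mB_def)
qed

theorem proposition2p18:
  fixes W :: "bool list set"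
  assumes "rep_set W"
  shows
   "(\<forall>w \<in> W. \<forall>\<phi>. cmod \<phi> = 1 \<longrightarrow>
       pmodule (length w) (A_w w * D_phi (length w) \<phi>) (B_w w * D_phi (length w) \<phi>) \<and>
       irreducible_pmod (length w) (A_w w * D_phi (length w) \<phi>) (B_w w * D_phi (length w) \<phi>) \<and>
       Hatom_ray (length w) (A_w w * D_phi (length w) \<phi>) (B_w w * D_phi (length w) \<phi>) (per_ray w)
         = carrier_vec (length w))
  \<and> (\<forall>n A B. pmodule n A B \<and> atomic n A B \<and> irreducible_pmod n A B \<longrightarrow>
       (\<exists>v \<in> W. length v = n \<and> (\<exists>lam. cmod lam = 1 \<and>
          unit_equiv n A B n (A_w v * D_phi n lam) (B_w v * D_phi n lam))))
  \<and> (\<forall>w \<in> W. \<forall>w' \<in> W. \<forall>\<phi> \<phi>'. cmod \<phi> = 1 \<longrightarrow> cmod \<phi>' = 1 \<longrightarrow>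
       (unit_equiv (length w) (A_w w * D_phi (length w) \<phi>) (B_w w * D_phi (length w) \<phi>)
          (length w') (A_w w' * D_phi (length w') \<phi>') (B_w w' * D_phi (length w') \<phi>')
        \<longleftrightarrow> (w, \<phi>) = (w', \<phi>')))"
proof (intro conjI ballI allI impI)
  fix w \<phi> assume w: "w \<in> W" and \<phi>: "cmod \<phi> = 1"
  have pr: "prime_word w" using assms w by (simp add: rep_set_def)
  from part1[OF pr \<phi>]
  show "pmodule (length w) (A_w w * D_phi (length w) \<phi>) (B_w w * D_phi (length w) \<phi>)"
    "irreducible_pmod (length w) (A_w w * D_phi (length w) \<phi>) (B_w w * D_phi (length w) \<phi>)"
    "Hatom_ray (length w) (A_w w * D_phi (length w) \<phi>) (B_w w * D_phi (length w) \<phi>) (per_ray w)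
         = carrier_vec (length w)" by (simp_all add: mA_def mB_def)
next
  fix n A B assume "pmodule n A B \<and> atomic n A B \<and> irreducible_pmod n A B"
  thus "\<exists>v \<in> W. length v = n \<and> (\<exists>lam. cmod lam = 1 \<and>
          unit_equiv n A B n (A_w v * D_phi n lam) (B_w v * D_phi n lam))"
    using part2[OF assms] by blast
next
  fix w w' \<phi> \<phi>' assume w: "w \<in> W" and w': "w' \<in> W" and \<phi>: "cmod \<phi> = 1" and \<phi>': "cmod \<phi>' = 1"
  show "unit_equiv (length w) (A_w w * D_phi (length w) \<phi>) (B_w w * D_phi (length w) \<phi>)
          (length w') (A_w w' * D_phi (length w') \<phi>') (B_w w' * D_phi (length w') \<phi>')
        \<longleftrightarrow> (w, \<phi>) = (w', \<phi>')"
    using part3[OF assms w w' \<phi> \<phi>'] by (simp add: mA_def mB_def)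
qed


end
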